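(* Let $A$ be a $C^*$-algebra and let $J \subset A$ be a closed right ideal. If $J$ is topologically essential, then $J$ is essential.
   Context: A closed right ideal $J$ of a $C^*$-algebra $A$ is called topologically essential if for every nonzero closed right ideal $K \subset A$ one has $J \cap K \neq \{0\}$. It is called essential if for every nonzero right ideal $I \subset A$ (not necessarily closed; a right ideal here means a linear subspace $I$ with $IA \subset I$) one has $J \cap I \neq \{0\}$. *)

theory Defs
  imports Complex_Main
begin

text \<open>Abstract (not necessarily unital) C*-algebras: a complex Banach algebra with an
  isometric-by-C*-identity involution.\<close>

class cstar_algebra = banach + real_normed_algebra +
  fixes scaleC :: "complex \<Rightarrow> 'a \<Rightarrow> 'a"
    and adj :: "'a \<Rightarrow> 'a"
  assumes scaleC_add_right: "scaleC c (x + y) = scaleC c x + scaleC c y"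
    and scaleC_add_left: "scaleC (c + d) x = scaleC c x + scaleC d x"
    and scaleC_scaleC: "scaleC c (scaleC d x) = scaleC (c * d) x"
    and scaleC_one: "scaleC 1 x = x"
    and scaleR_scaleC: "scaleR r x = scaleC (complex_of_real r) x"
    and norm_scaleC: "norm (scaleC c x) = cmod c * norm x"
    and mult_scaleC_left: "scaleC c x * y = scaleC c (x * y)"
    and mult_scaleC_right: "x * scaleC c y = scaleC c (x * y)"
    and adj_adj: "adj (adj x) = x"
    and adj_add: "adj (x + y) = adj x + adj y"
    and adj_scaleC: "adj (scaleC c x) = scaleC (cnj c) (adj x)"
    and adj_mult: "adj (x * y) = adj y * adj x"
    and cstar_identity: "norm (adj x * x) = norm x * norm x"

definition right_ideal :: "'a::cstar_algebra set \<Rightarrow> bool" where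
  "right_ideal I \<longleftrightarrow> 0 \<in> I \<and> (\<forall>x\<in>I. \<forall>y\<in>I. x + y \<in> I)
     \<and> (\<forall>c. \<forall>x\<in>I. scaleC c x \<in> I) \<and> (\<forall>x\<in>I. \<forall>a. x * a \<in> I)"

definition closed_right_ideal :: "'a::cstar_algebra set \<Rightarrow> bool" where
  "closed_right_ideal I \<longleftrightarrow> right_ideal I \<and> closed I"

definition topologically_essential :: "'a::cstar_algebra set \<Rightarrow> bool" where
  "topologically_essential J \<longleftrightarrow>
     (\<forall>K. closed_right_ideal K \<and> K \<noteq> {0} \<longrightarrow> J \<inter> K \<noteq> {0})"

definition essential :: "'a::cstar_algebra set \<Rightarrow> bool" where
  "essential J \<longleftrightarrow> (\<forall>I. right_ideal I \<and> I \<noteq> {0} \<longrightarrow> J \<inter> I \<noteq> {0})"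

end

theory Submission
  imports Defs "HOL-Analysis.Analysis" "HOL-Computational_Algebra.Fundamental_Theorem_Algebra"
begin


lemma scaleC_zero_right [simp]: "scaleC c 0 = (0::'a::cstar_algebra)"
proof -
  have h: "scaleC c 0 = scaleC c 0 + scaleC c 0" using scaleC_add_right[of c 0 0] by (simp only: add.right_neutral)
  then show ?thesis by (simp only: add_cancel_right_right)
qed

lemma scaleC_zero_left [simp]: "scaleC 0 x = (0::'a::cstar_algebra)"
proof -
  have h0: "scaleC (0 + 0) x = scaleC 0 x + scaleC 0 x" by (rule scaleC_add_left)
  have h: "scaleC 0 x = scaleC 0 x + scaleC 0 x" using h0 by (metis add_0)
  then show ?thesis by (simp only: add_cancel_right_right)
qed

lemma scaleC_minus_right: "scaleC c (- x) = - scaleC c x"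
proof -
  have "scaleC c x + scaleC c (-x) = scaleC c (x + -x)" by (rule scaleC_add_right[symmetric])
  also have "\<dots> = 0" by (simp only: add.right_inverse scaleC_zero_right)
  finally show ?thesis by (rule minus_unique[symmetric])
qed

lemma scaleC_minus_left: "scaleC (- c) x = - scaleC c x"
proof -
  have "scaleC c x + scaleC (-c) x = scaleC (c + -c) x" by (rule scaleC_add_left[symmetric])
  also have "\<dots> = 0" by (simp only: add.right_inverse scaleC_zero_left)
  finally show ?thesis by (rule minus_unique[symmetric])
qed

lemma scaleC_diff_right: "scaleC c (x - y) = scaleC c x - scaleC c y"
  by (simp only: diff_conv_add_uminus scaleC_add_right scaleC_minus_right)

lemma scaleC_diff_left: "scaleC (c - d) x = scaleC c x - scaleC d x"
  by (simp only: diff_conv_add_uminus scaleC_add_left scaleC_minus_left)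

lemma scaleC_sum_right: "scaleC c (sum f S) = (\<Sum>i\<in>S. scaleC c (f i))"
  by (induction S rule: infinite_finite_induct) (auto simp: scaleC_add_right)

lemma scaleC_sum_left: "scaleC (sum f S) x = (\<Sum>i\<in>S. scaleC (f i) x)"
  by (induction S rule: infinite_finite_induct) (auto simp: scaleC_add_left)

lemma scaleC_of_real: "scaleC (of_real r) x = scaleR r x"
  by (simp add: scaleR_scaleC)

lemma scaleC_scaleR: "scaleC c (scaleR r x) = scaleR r (scaleC c x)"
  by (simp add: scaleR_scaleC scaleC_scaleC mult.commute)

lemma adj_zero [simp]: "adj 0 = (0::'a::cstar_algebra)"
proof -
  have h: "adj 0 = adj 0 + adj 0" using adj_add[of 0 0] by (simp only: add.right_neutral)
  then show ?thesis by (simp only: add_cancel_right_right)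
qed

lemma adj_minus: "adj (- x) = - adj x"
proof -
  have "adj x + adj (-x) = adj (x + -x)" by (rule adj_add[symmetric])
  also have "\<dots> = 0" by (simp only: add.right_inverse adj_zero)
  finally show ?thesis by (rule minus_unique[symmetric])
qed

lemma adj_diff: "adj (x - y) = adj x - adj y"
  by (simp only: diff_conv_add_uminus adj_add adj_minus)

lemma adj_scaleR: "adj (scaleR r x) = scaleR r (adj x)"
  by (simp add: scaleR_scaleC adj_scaleC)

lemma adj_sum: "adj (sum f S) = (\<Sum>i\<in>S. adj (f i))"
  by (induction S rule: infinite_finite_induct) (auto simp: adj_add)

lemma norm_adj_le: "norm x \<le> norm (adj x)"
proof (cases "x = 0")
  case False
  have "norm x * norm x = norm (adj x * x)" by (rule cstar_identity[symmetric])
  also have "\<dots> \<le> norm (adj x) * norm x" by (rule norm_mult_ineq)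
  finally show ?thesis using False by simp
qed simp

lemma norm_adj [simp]: "norm (adj x) = norm x"
  using norm_adj_le[of x] norm_adj_le[of "adj x"] by (simp add: adj_adj)

lemma cstar_identity': "norm (x * adj x) = norm x * norm x"
  using cstar_identity[of "adj x"] by (simp add: adj_adj)

lemma norm_le_sup_mult:
  fixes x :: "'a::cstar_algebra"
  assumes "\<And>y. norm (x * y) \<le> K * norm y" and "0 \<le> K"
  shows "norm x \<le> K"
proof (cases "x = 0")
  case True then show ?thesis using assms(2) by simp
next
  case False
  have "norm x * norm x \<le> K * norm x"
    using assms(1)[of "adj x"] cstar_identity'[of x] by simp
  then show ?thesis using False by simp
qed


section \<open>Unitization\<close>

datatype 'a uni = Uni (sc: complex) (ve: 'a)

lemma uni_eq_iff: "u = v \<longleftrightarrow> sc u = sc v \<and> ve u = ve v"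
  by (cases u; cases v) auto

instantiation uni :: (cstar_algebra) ring_1
begin
definition zero_uni where "0 = Uni 0 0"
definition one_uni where "1 = Uni 1 0"
definition plus_uni where "u + v = Uni (sc u + sc v) (ve u + ve v)"
definition uminus_uni where "- u = Uni (- sc u) (- ve u)"
definition minus_uni where "u - v = Uni (sc u - sc v) (ve u - ve v)"
definition times_uni where
  "u * v = Uni (sc u * sc v) (scaleC (sc u) (ve v) + scaleC (sc v) (ve u) + ve u * ve v)"
instance
proof
  fix a b c :: "'a uni"
  show "a * b * c = a * (b * c)"
    by (simp add: times_uni_def uni_eq_iff scaleC_add_right scaleC_scaleC mult_scaleC_left
        mult_scaleC_right distrib_left distrib_right mult.assoc ac_simps)
  show "a + b + c = a + (b + c)" by (simp add: plus_uni_def uni_eq_iff ac_simps)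
  show "a + b = b + a" by (simp add: plus_uni_def uni_eq_iff ac_simps)
  show "0 + a = a" by (simp add: plus_uni_def zero_uni_def uni_eq_iff)
  show "- a + a = 0" by (simp add: plus_uni_def zero_uni_def uminus_uni_def uni_eq_iff)
  show "a - b = a + - b" by (simp add: plus_uni_def minus_uni_def uminus_uni_def uni_eq_iff)
  show "(a + b) * c = a * c + b * c"
    by (simp add: times_uni_def plus_uni_def uni_eq_iff scaleC_add_right scaleC_add_left
        distrib_left distrib_right ac_simps)
  show "a * (b + c) = a * b + a * c"
    by (simp add: times_uni_def plus_uni_def uni_eq_iff scaleC_add_right scaleC_add_left
        distrib_left distrib_right ac_simps)
  show "1 * a = a" by (simp add: times_uni_def one_uni_def uni_eq_iff scaleC_one)
  show "a * 1 = a" by (simp add: times_uni_def one_uni_def uni_eq_iff scaleC_one)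
  show "(0::'a uni) \<noteq> 1" by (simp add: zero_uni_def one_uni_def)
qed
end

lemma sc_zero [simp]: "sc 0 = 0" and ve_zero [simp]: "ve 0 = 0"
  and sc_one [simp]: "sc 1 = 1" and ve_one [simp]: "ve 1 = 0"
  by (simp_all add: zero_uni_def one_uni_def)

lemma sc_plus [simp]: "sc (u + v) = sc u + sc v" and ve_plus [simp]: "ve (u + v) = ve u + ve v"
  and sc_minus [simp]: "sc (u - v) = sc u - sc v" and ve_minus [simp]: "ve (u - v) = ve u - ve v"
  and sc_uminus [simp]: "sc (- u) = - sc u" and ve_uminus [simp]: "ve (- u) = - ve u"
  and sc_times [simp]: "sc (u * v) = sc u * sc v"
  and ve_times [simp]: "ve (u * v) = scaleC (sc u) (ve v) + scaleC (sc v) (ve u) + ve u * ve v"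
  by (simp_all add: plus_uni_def minus_uni_def uminus_uni_def times_uni_def)

instantiation uni :: (cstar_algebra) real_vector
begin
definition scaleR_uni where "scaleR r u = Uni (of_real r * sc u) (scaleR r (ve u))"
instance
  by standard (simp_all add: scaleR_uni_def uni_eq_iff distrib_left distrib_right scaleR_add_right
      scaleR_add_left)
end

lemma sc_scaleR [simp]: "sc (scaleR r u) = of_real r * sc u"
  and ve_scaleR [simp]: "ve (scaleR r u) = scaleR r (ve u)"
  by (simp_all add: scaleR_uni_def)

instance uni :: (cstar_algebra) real_algebra_1
  by standard (simp_all add: uni_eq_iff scaleC_scaleR scaleR_scaleC scaleC_scaleC scaleC_add_right
      mult_scaleC_left mult_scaleC_right ac_simps)

instantiation uni :: (cstar_algebra) real_normed_vector
begin
definition norm_uni where "norm u = cmod (sc u) + norm (ve u)"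
definition dist_uni where "dist u v = norm (u - v)" for u v :: "'a uni"
definition sgn_uni where "sgn u = scaleR (inverse (norm u)) u" for u :: "'a uni"
definition uniformity_uni where
  "uniformity = (INF e\<in>{0<..}. principal {(x, y::'a uni). dist x y < e})"
definition open_uni where
  "open U \<longleftrightarrow> (\<forall>x\<in>U. \<forall>\<^sub>F (x', y) in uniformity. x' = x \<longrightarrow> y \<in> (U::'a uni set))"
instance
proof
  fix u v :: "'a uni" and r :: real
  show "dist u v = norm (u - v)" by (simp add: dist_uni_def)
  show "sgn u = scaleR (inverse (norm u)) u" by (simp add: sgn_uni_def)
  show "norm u = 0 \<longleftrightarrow> u = 0"
    by (auto simp: norm_uni_def uni_eq_iff add_nonneg_eq_0_iff)
  show "norm (u + v) \<le> norm u + norm v"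
    using norm_triangle_ineq[of "sc u" "sc v"] norm_triangle_ineq[of "ve u" "ve v"]
    by (simp add: norm_uni_def)
  show "norm (scaleR r u) = \<bar>r\<bar> * norm u"
    by (simp add: norm_uni_def norm_mult distrib_left)
qed (simp_all add: uniformity_uni_def open_uni_def)
end

lemma norm_sc_le: "cmod (sc u) \<le> norm u" and norm_ve_le: "norm (ve u) \<le> norm u"
  by (simp_all add: norm_uni_def)

instance uni :: (cstar_algebra) real_normed_algebra_1
proof
  fix u v :: "'a uni"
  show "norm (1::'a uni) = 1" by (simp add: norm_uni_def)
  have t: "norm (a + b + c) \<le> norm a + norm b + norm c" for a b c :: 'a
    using norm_triangle_ineq[of "a+b" c] norm_triangle_ineq[of a b] by linarith
  have "norm (ve (u * v)) \<le> cmod (sc u) * norm (ve v) + cmod (sc v) * norm (ve u) + norm (ve u) * norm (ve v)"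
    using t[of "scaleC (sc u) (ve v)" "scaleC (sc v) (ve u)" "ve u * ve v"]
      norm_mult_ineq[of "ve u" "ve v"] by (simp add: norm_scaleC)
  then show "norm (u * v) \<le> norm u * norm v"
    by (simp add: norm_uni_def norm_mult algebra_simps)
qed

lemma Cauchy_sc: "Cauchy X \<Longrightarrow> Cauchy (\<lambda>n. sc (X n :: 'a::cstar_algebra uni))"
  unfolding Cauchy_def dist_norm
  by (metis (no_types, lifting) le_less_trans norm_sc_le sc_minus)

lemma Cauchy_ve: "Cauchy X \<Longrightarrow> Cauchy (\<lambda>n. ve (X n :: 'a::cstar_algebra uni))"
  unfolding Cauchy_def dist_norm
  by (metis (no_types, lifting) le_less_trans norm_ve_le ve_minus)

lemma tendsto_Uni:
  assumes "(f \<longlongrightarrow> a) F" "(g \<longlongrightarrow> b) F"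
  shows "((\<lambda>n. Uni (f n) (g n)) \<longlongrightarrow> Uni a (b::'a::cstar_algebra)) F"
proof -
  have "((\<lambda>n. cmod (f n - a) + norm (g n - b)) \<longlongrightarrow> 0 + 0) F"
    using assms by (intro tendsto_add) (simp_all add: tendsto_norm_zero_iff LIM_zero_iff)
  then have "((\<lambda>n. norm (Uni (f n) (g n) - Uni a b)) \<longlongrightarrow> 0) F"
    by (simp add: norm_uni_def)
  then show ?thesis by (simp add: tendsto_norm_zero_iff LIM_zero_iff)
qed

instance uni :: (cstar_algebra) banach
proof
  fix X :: "nat \<Rightarrow> 'a uni" assume "Cauchy X"
  have "convergent (\<lambda>n. sc (X n))" "convergent (\<lambda>n. ve (X n))"
    using Cauchy_sc[OF \<open>Cauchy X\<close>] Cauchy_ve[OF \<open>Cauchy X\<close>] Cauchy_convergent by auto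
  then obtain a b where "(\<lambda>n. sc (X n)) \<longlonglongrightarrow> a" "(\<lambda>n. ve (X n)) \<longlonglongrightarrow> b"
    unfolding convergent_def by blast
  then have "(\<lambda>n. Uni (sc (X n)) (ve (X n))) \<longlonglongrightarrow> Uni a b" by (rule tendsto_Uni)
  then show "convergent X" by (auto simp: convergent_def)
qed


definition isinv :: "'b::ring_1 \<Rightarrow> 'b \<Rightarrow> bool" where
  "isinv u v \<longleftrightarrow> u * v = 1 \<and> v * u = 1"

lemma isinv_unique: "isinv u v \<Longrightarrow> isinv u w \<Longrightarrow> v = w"
  unfolding isinv_def by (metis mult.assoc mult_1_left mult_1_right)

lemma isinv_mult: "isinv a a' \<Longrightarrow> isinv b b' \<Longrightarrow> isinv (a * b) (b' * a')"
  unfolding isinv_def by (metis mult.assoc mult_1_left)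

lemma isinv_commute:
  assumes "isinv u v" "u * z = z * u" shows "v * z = z * v"
proof -
  have "v * z = v * z * (u * v)" using assms(1) by (simp add: isinv_def)
  also have "\<dots> = v * (z * u) * v" by (simp add: mult.assoc)
  also have "\<dots> = v * (u * z) * v" using assms(2) by simp
  also have "\<dots> = (v * u) * z * v" by (simp add: mult.assoc)
  also have "\<dots> = z * v" using assms(1) by (simp add: isinv_def)
  finally show ?thesis .
qed

lemma geo_left: "(1 - x) * (\<Sum>i<n. x ^ i) = 1 - (x::'b::ring_1) ^ n"
proof (induction n)
  case (Suc n)
  have "(1 - x) * (\<Sum>i<Suc n. x ^ i) = (1 - x) * (\<Sum>i<n. x ^ i) + (1 - x) * x ^ n"
    by (simp add: distrib_left)
  also have "\<dots> = 1 - x ^ n + (1 - x) * x ^ n" by (simp only: Suc.IH)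
  also have "\<dots> = 1 - x * x ^ n" by (simp add: algebra_simps)
  finally show ?case by simp
qed simp

lemma geo_right: "(\<Sum>i<n. x ^ i) * (1 - x) = 1 - (x::'b::ring_1) ^ n"
proof (induction n)
  case (Suc n)
  have "(\<Sum>i<Suc n. x ^ i) * (1 - x) = (\<Sum>i<n. x ^ i) * (1 - x) + x ^ n * (1 - x)"
    by (simp add: distrib_right)
  also have "\<dots> = 1 - x ^ n + x ^ n * (1 - x)" by (simp only: Suc.IH)
  also have "\<dots> = 1 - x ^ n * x" by (simp add: algebra_simps)
  finally show ?case by (simp add: power_commutes)
qed simp

lemma neumann:
  fixes u :: "'b::{real_normed_algebra_1,banach}"
  assumes "summable (\<lambda>n. norm (u ^ n))"
  shows "isinv (1 - u) (\<Sum>n. u ^ n)"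
proof -
  have s: "summable (\<lambda>n. u ^ n)" using assms by (rule summable_norm_cancel)
  have a: "u * (\<Sum>n. u ^ n) = (\<Sum>n. u ^ Suc n)"
    using suminf_mult[OF s, of u] by simp
  have b: "(\<Sum>n. u ^ n) * u = (\<Sum>n. u ^ Suc n)"
    unfolding power_Suc2 by (rule suminf_mult2[OF s])
  have c: "(\<Sum>n. u ^ Suc n) = (\<Sum>n. u ^ n) - 1"
    using suminf_split_head[OF s] by (simp only: power_0)
  have l: "(1 - u) * (\<Sum>n. u ^ n) = 1"
  proof -
    have "(1 - u) * (\<Sum>n. u ^ n) = (\<Sum>n. u ^ n) - u * (\<Sum>n. u ^ n)"
      by (simp only: left_diff_distrib mult_1_left)
    also have "\<dots> = 1" by (simp only: a c) simp
    finally show ?thesis .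
  qed
  have r: "(\<Sum>n. u ^ n) * (1 - u) = 1"
  proof -
    have "(\<Sum>n. u ^ n) * (1 - u) = (\<Sum>n. u ^ n) - (\<Sum>n. u ^ n) * u"
      by (simp only: right_diff_distrib mult_1_right)
    also have "\<dots> = 1" by (simp only: b c) simp
    finally show ?thesis .
  qed
  show ?thesis unfolding isinv_def using l r by simp
qed

lemma neumann_small:
  fixes u :: "'b::{real_normed_algebra_1,banach}"
  assumes "norm u < 1"
  shows "isinv (1 - u) (\<Sum>n. u ^ n)" and "norm ((\<Sum>n. u ^ n) - 1) \<le> norm u / (1 - norm u)"
proof -
  have sn: "summable (\<lambda>n. norm u ^ n)" using assms by (simp add: summable_geometric)
  have sm: "summable (\<lambda>n. norm (u ^ n))"
    by (rule summable_comparison_test[OF _ sn]) (simp add: norm_power_ineq)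
  show "isinv (1 - u) (\<Sum>n. u ^ n)" by (rule neumann[OF sm])
  have s: "summable (\<lambda>n. u ^ n)" using sm by (rule summable_norm_cancel)
  have "(\<Sum>n. u ^ n) - 1 = (\<Sum>n. u ^ Suc n)"
    using suminf_split_head[OF s] by simp
  also have "\<dots> = u * (\<Sum>n. u ^ n)"
    using suminf_mult[OF s, of u] by simp
  finally have eq: "(\<Sum>n. u ^ n) - 1 = u * (\<Sum>n. u ^ n)" .
  have "norm (\<Sum>n. u ^ n) \<le> (\<Sum>n. norm (u ^ n))" by (rule summable_norm[OF sm])
  also have "\<dots> \<le> (\<Sum>n. norm u ^ n)"
    by (rule suminf_le[OF _ sm sn]) (simp add: norm_power_ineq)
  also have "\<dots> = 1 / (1 - norm u)" using assms by (simp add: suminf_geometric)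
  finally have ns: "norm (\<Sum>n. u ^ n) \<le> 1 / (1 - norm u)" .
  have "norm ((\<Sum>n. u ^ n) - 1) \<le> norm u * norm (\<Sum>n. u ^ n)"
    unfolding eq by (rule norm_mult_ineq)
  also have "\<dots> \<le> norm u * (1 / (1 - norm u))"
    by (rule mult_left_mono[OF ns norm_ge_zero])
  finally show "norm ((\<Sum>n. u ^ n) - 1) \<le> norm u / (1 - norm u)" by simp
qed

lemma inverse_perturb:
  fixes u :: "'b::{real_normed_algebra_1,banach}"
  assumes inv: "isinv u v" and small: "norm v * norm w < 1"
  shows "\<exists>v'. isinv (u - w) v' \<and> norm (v' - v) \<le> norm v * (norm v * norm w) / (1 - norm v * norm w)"
proof -
  define q where "q = v * w"
  have nq: "norm q \<le> norm v * norm w" unfolding q_def by (rule norm_mult_ineq)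
  then have nq1: "norm q < 1" using small by linarith
  define S where "S = (\<Sum>n. q ^ n)"
  have iS: "isinv (1 - q) S" and nS: "norm (S - 1) \<le> norm q / (1 - norm q)"
    using neumann_small[OF nq1] by (simp_all add: S_def)
  have uw: "u - w = u * (1 - q)"
    using inv by (simp add: q_def isinv_def algebra_simps mult.assoc[symmetric])
  have i1: "(u - w) * (S * v) = 1"
  proof -
    have "(u - w) * (S * v) = u * ((1 - q) * S) * v" by (simp add: uw mult.assoc)
    also have "\<dots> = 1" using iS inv by (simp add: isinv_def)
    finally show ?thesis .
  qed
  have i2: "(S * v) * (u - w) = 1"
  proof -
    have "v * (u - w) = 1 - q" using inv by (simp add: q_def isinv_def algebra_simps)
    then have "(S * v) * (u - w) = S * (1 - q)" by (simp add: mult.assoc)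
    also have "\<dots> = 1" using iS by (simp add: isinv_def)
    finally show ?thesis .
  qed
  have "S * v - v = (S - 1) * v" by (simp add: algebra_simps)
  then have "norm (S * v - v) \<le> norm (S - 1) * norm v" by (simp add: norm_mult_ineq)
  also have "\<dots> \<le> (norm q / (1 - norm q)) * norm v"
    by (rule mult_right_mono[OF nS norm_ge_zero])
  also have "norm q / (1 - norm q) \<le> (norm v * norm w) / (1 - norm v * norm w)"
    using nq nq1 small norm_ge_zero[of q] by (intro frac_le) auto
  then have "(norm q / (1 - norm q)) * norm v \<le> ((norm v * norm w) / (1 - norm v * norm w)) * norm v"
    by (rule mult_right_mono) simp
  finally have "norm (S * v - v) \<le> norm v * (norm v * norm w) / (1 - norm v * norm w)"
    by (simp add: field_simps)
  with i1 i2 show ?thesis unfolding isinv_def by blast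
qed


definition cof :: "complex \<Rightarrow> 'a::cstar_algebra uni" where "cof c = Uni c 0"
definition emb :: "'a::cstar_algebra \<Rightarrow> 'a uni" where "emb a = Uni 0 a"

lemma sc_cof [simp]: "sc (cof c) = c" and ve_cof [simp]: "ve (cof c) = 0"
  and sc_emb [simp]: "sc (emb a) = 0" and ve_emb [simp]: "ve (emb a) = a"
  by (simp_all add: cof_def emb_def)

lemma cof_mult: "cof (c * d) = (cof c * cof d :: 'a::cstar_algebra uni)"
  by (simp add: uni_eq_iff)
lemma cof_add: "cof (c + d) = (cof c + cof d :: 'a::cstar_algebra uni)"
  by (simp add: uni_eq_iff)
lemma cof_diff: "cof (c - d) = (cof c - cof d :: 'a::cstar_algebra uni)"
  by (simp add: uni_eq_iff)
lemma cof_uminus: "cof (- c) = (- cof c :: 'a::cstar_algebra uni)"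
  by (simp add: uni_eq_iff)
lemma cof_one [simp]: "cof 1 = (1 :: 'a::cstar_algebra uni)"
  by (simp add: uni_eq_iff)
lemma cof_zero [simp]: "cof 0 = (0 :: 'a::cstar_algebra uni)"
  by (simp add: uni_eq_iff)
lemma cof_commute: "cof c * u = u * (cof c :: 'a::cstar_algebra uni)"
  by (simp add: uni_eq_iff mult.commute)
lemma norm_cof [simp]: "norm (cof c :: 'a::cstar_algebra uni) = cmod c"
  by (simp add: norm_uni_def)
lemma cof_power: "cof c ^ n = (cof (c ^ n) :: 'a::cstar_algebra uni)"
  by (induction n) (simp_all add: cof_mult)
lemma cof_sum: "cof (sum f S) = (\<Sum>i\<in>S. cof (f i) :: 'a::cstar_algebra uni)"
  by (induction S rule: infinite_finite_induct) (simp_all add: cof_add)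
lemma of_real_uni: "(of_real r :: 'a::cstar_algebra uni) = cof (of_real r)"
  by (simp add: uni_eq_iff of_real_def)
lemma cof_of_nat: "(of_nat n :: 'a::cstar_algebra uni) = cof (of_nat n)"
  by (induction n) (simp_all add: cof_add)
lemma scaleR_uni_cof: "scaleR r (u :: 'a::cstar_algebra uni) = cof (of_real r) * u"
  by (simp add: uni_eq_iff scaleC_of_real)

lemma emb_mult: "emb (a * b) = emb a * emb (b::'a::cstar_algebra)"
  by (simp add: uni_eq_iff)
lemma emb_add: "emb (a + b) = emb a + emb (b::'a::cstar_algebra)"
  by (simp add: uni_eq_iff)
lemma emb_diff: "emb (a - b) = emb a - emb (b::'a::cstar_algebra)"
  by (simp add: uni_eq_iff)
lemma emb_zero [simp]: "emb 0 = (0::'a::cstar_algebra uni)"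
  by (simp add: uni_eq_iff)
lemma norm_emb [simp]: "norm (emb a) = norm (a::'a::cstar_algebra)"
  by (simp add: norm_uni_def)
lemma emb_inj: "emb a = emb b \<longleftrightarrow> a = (b::'a::cstar_algebra)"
  by (simp add: uni_eq_iff)
lemma cof_mult_emb: "cof c * emb a = emb (scaleC c (a::'a::cstar_algebra))"
  by (simp add: uni_eq_iff)

lemma power_cof_mult: "(cof c * Y) ^ m = cof (c ^ m) * (Y ^ m :: 'a::cstar_algebra uni)"
proof (induction m)
  case (Suc m)
  have "(cof c * Y) ^ Suc m = cof c * Y * (cof (c ^ m) * Y ^ m)" by (simp add: Suc)
  also have "\<dots> = cof c * cof (c ^ m) * (Y * Y ^ m)"
    by (simp add: mult.assoc) (metis cof_commute mult.assoc)
  finally show ?case by (simp add: cof_mult)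
qed simp

section \<open>Averaging over roots of unity\<close>

definition omega :: "nat \<Rightarrow> complex" where "omega n = exp (2 * of_real pi * \<i> / of_nat n)"

lemma omega_power: "omega n ^ m = exp (2 * of_real pi * \<i> * of_nat m / of_nat n)"
  unfolding omega_def exp_of_nat_mult[symmetric] by (simp add: field_simps)

lemma omega_power_n: "n \<ge> 1 \<Longrightarrow> omega n ^ n = 1"
  unfolding omega_power using complex_root_unity[of n 1] by simp

lemma omega_power_ne1: "0 < m \<Longrightarrow> m < n \<Longrightarrow> omega n ^ m \<noteq> 1"
  using complex_root_unity_eq[of n m 0] unfolding omega_power by simp

lemma sum_omega: "n \<ge> 1 \<Longrightarrow> m < n \<Longrightarrow> (\<Sum>k<n. (omega n ^ m) ^ k) = (if m = 0 then of_nat n else 0)"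
proof (cases "m = 0")
  case False
  assume n: "n \<ge> 1" "m < n"
  have ne: "omega n ^ m \<noteq> 1" using False n by (intro omega_power_ne1) auto
  have "(omega n ^ m) ^ n = 1"
    by (metis mult.commute omega_power_n n(1) power_mult power_one)
  then show ?thesis using False geometric_sum[OF ne, of n] by simp
qed simp

lemma roots_avg:
  fixes Y :: "'a::cstar_algebra uni"
  assumes n: "n \<ge> 1" and G: "\<And>k. k < n \<Longrightarrow> isinv (1 - cof (omega n ^ k) * Y) (G k)"
  shows "isinv (1 - Y ^ n) (cof (1 / of_nat n) * (\<Sum>k<n. G k))"
proof -
  define Z where "Z k = cof (omega n ^ k) * Y" for k
  define H where "H k = (\<Sum>m<n. Z k ^ m)" for k
  have Zn: "Z k ^ n = Y ^ n" for k
  proof -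
    have "(omega n ^ k) ^ n = 1"
      by (metis mult.commute omega_power_n n power_mult power_one)
    then show ?thesis by (simp add: Z_def power_cof_mult)
  qed
  have H1: "(1 - Z k) * H k = 1 - Y ^ n" for k
    unfolding H_def geo_left Zn ..
  have H2: "H k * (1 - Z k) = 1 - Y ^ n" for k
    unfolding H_def geo_right Zn ..
  have GH1: "G k * (1 - Y ^ n) = H k" if "k < n" for k
  proof -
    have "G k * (1 - Y ^ n) = (G k * (1 - Z k)) * H k" by (simp only: H1 mult.assoc)
    also have "\<dots> = H k" using G[OF that] by (simp add: isinv_def Z_def)
    finally show ?thesis .
  qed
  have GH2: "(1 - Y ^ n) * G k = H k" if "k < n" for k
  proof -
    have "(1 - Y ^ n) * G k = H k * ((1 - Z k) * G k)" by (simp only: mult.assoc[symmetric] H2)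
    also have "\<dots> = H k" using G[OF that] by (simp add: isinv_def Z_def)
    finally show ?thesis .
  qed
  have sumH: "(\<Sum>k<n. H k) = cof (of_nat n)"
  proof -
    have "(\<Sum>k<n. H k) = (\<Sum>k<n. \<Sum>m<n. cof ((omega n ^ m) ^ k) * Y ^ m)"
      unfolding H_def Z_def power_cof_mult
      by (intro sum.cong refl) (simp add: power_mult[symmetric] mult.commute)
    also have "\<dots> = (\<Sum>m<n. \<Sum>k<n. cof ((omega n ^ m) ^ k) * Y ^ m)"
      by (rule sum.swap)
    also have "\<dots> = (\<Sum>m<n. cof (\<Sum>k<n. (omega n ^ m) ^ k) * Y ^ m)"
      by (simp add: cof_sum sum_distrib_right)
    also have "\<dots> = (\<Sum>m<n. cof (if m = 0 then of_nat n else 0) * Y ^ m)"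
      using n by (intro sum.cong refl) (simp add: sum_omega)
    also have "\<dots> = (\<Sum>m<n. if m = 0 then cof (of_nat n) else 0)"
      by (intro sum.cong refl) simp
    also have "\<dots> = cof (of_nat n)" using n by (simp add: sum.delta)
    finally show ?thesis .
  qed
  have c1: "cof (1 / of_nat n) * cof (of_nat n) = (1::'a uni)"
    using n by (simp add: cof_mult[symmetric])
  have "(1 - Y ^ n) * (cof (1 / of_nat n) * (\<Sum>k<n. G k)) = cof (1 / of_nat n) * (\<Sum>k<n. (1 - Y ^ n) * G k)"
  proof -
    have "(1 - Y ^ n) * (cof (1 / of_nat n) * (\<Sum>k<n. G k)) = cof (1 / of_nat n) * ((1 - Y ^ n) * (\<Sum>k<n. G k))"
      by (metis cof_commute mult.assoc)
    then show ?thesis by (simp add: sum_distrib_left)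
  qed
  also have "\<dots> = 1" using GH2 sumH c1 by simp
  finally have l: "(1 - Y ^ n) * (cof (1 / of_nat n) * (\<Sum>k<n. G k)) = 1" .
  have "(cof (1 / of_nat n) * (\<Sum>k<n. G k)) * (1 - Y ^ n) = cof (1 / of_nat n) * (\<Sum>k<n. G k * (1 - Y ^ n))"
    by (simp add: sum_distrib_right mult.assoc)
  also have "\<dots> = 1" using GH1 sumH c1 by simp
  finally show ?thesis using l by (simp add: isinv_def)
qed


section \<open>Rickart's elementary spectral radius argument\<close>

definition rinv :: "'b::ring_1 \<Rightarrow> 'b" where "rinv u = (THE v. isinv u v)"

lemma rinv_eq: "isinv u v \<Longrightarrow> rinv u = v"
  unfolding rinv_def using isinv_unique by blast

lemma norm_cof_mult: "norm (cof c * u) = cmod c * norm (u :: 'a::cstar_algebra uni)"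
  by (simp add: norm_uni_def norm_mult norm_scaleC distrib_left)

lemma resolvent_cont:
  fixes X :: "'a::cstar_algebra uni"
  assumes inv: "\<forall>\<mu>\<in>S. \<exists>v. isinv (1 - cof \<mu> * X) v"
  shows "continuous_on S (\<lambda>\<mu>. rinv (1 - cof \<mu> * X))"
  unfolding continuous_on_iff
proof (intro ballI allI impI)
  fix \<mu>0 and e :: real assume \<mu>0: "\<mu>0 \<in> S" and e: "e > 0"
  obtain v0 where v0: "isinv (1 - cof \<mu>0 * X) v0" using inv \<mu>0 by blast
  define K where "K = norm v0"
  define c where "c = K * norm X + 1"
  have c: "c > 0" "K \<ge> 0"
  proof -
    have h: "0 \<le> K * norm X" by (simp add: K_def)
    show "c > 0" unfolding c_def using h by linarith
    show "K \<ge> 0" by (simp add: K_def)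
  qed
  define d where "d = min (1 / (2 * c)) (e / (2 * (K + 1) * c))"
  have d: "d > 0" using c e by (simp add: d_def)
  show "\<exists>d>0. \<forall>\<mu>\<in>S. dist \<mu> \<mu>0 < d \<longrightarrow> dist (rinv (1 - cof \<mu> * X)) (rinv (1 - cof \<mu>0 * X)) < e"
  proof (intro exI conjI ballI impI, fact d)
    fix \<mu> assume \<mu>: "\<mu> \<in> S" and dist: "dist \<mu> \<mu>0 < d"
    define w where "w = cof (\<mu> - \<mu>0) * X"
    have eqw: "1 - cof \<mu> * X = (1 - cof \<mu>0 * X) - w"
      by (simp add: w_def cof_diff algebra_simps)
    have nw: "norm w \<le> cmod (\<mu> - \<mu>0) * norm X" by (simp add: w_def norm_cof_mult)
    have dmu: "cmod (\<mu> - \<mu>0) < d" using dist by (simp add: dist_norm)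
    define t where "t = K * norm w"
    have t0: "t \<ge> 0" using c by (simp add: t_def)
    have "t \<le> c * cmod (\<mu> - \<mu>0)"
    proof -
      have "t \<le> K * (cmod (\<mu> - \<mu>0) * norm X)" unfolding t_def using nw c by (intro mult_left_mono) auto
      also have "\<dots> \<le> c * cmod (\<mu> - \<mu>0)" by (simp add: c_def algebra_simps)
      finally show ?thesis .
    qed
    then have tcs: "t < c * d" using mult_strict_left_mono[OF dmu c(1)] by linarith
    then have tc: "t \<le> c * d" by simp
    have t1: "t < 1/2"
    proof -
      have "c * d \<le> c * (1 / (2 * c))" using c by (intro mult_left_mono) (simp_all add: d_def)
      also have "\<dots> = 1/2" using c by simp
      finally show ?thesis using tcs by linarith
    qed
    obtain v' where v': "isinv (1 - cof \<mu> * X) v'" and bd: "norm (v' - v0) \<le> K * t / (1 - t)"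
      using inverse_perturb[OF v0, of w] t1 unfolding eqw[symmetric] t_def K_def by auto
    have "K * t / (1 - t) \<le> K * t / (1/2)"
    proof (cases "K * t = 0")
      case False
      then have "K * t > 0" using t0 c by (simp add: zero_less_mult_iff order_le_less)
      then show ?thesis using t1 by (intro divide_left_mono) auto
    qed auto
    also have "\<dots> = 2 * K * t" by simp
    finally have "K * t / (1 - t) \<le> 2 * K * t" .
    also have "\<dots> \<le> 2 * K * (c * d)" using tc c by (simp add: mult_left_mono)
    also have "\<dots> \<le> 2 * K * (c * (e / (2 * (K + 1) * c)))"
      using c by (intro mult_left_mono) (simp_all add: d_def)
    also have "\<dots> = e * (K / (K + 1))"
    proof -
      have k1: "K + 1 \<noteq> 0" using c by linarith
      have "2 * K * (c * (e / (2 * (K + 1) * c))) = (2 * c) * (K * e) / ((2 * c) * (K + 1))"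
        by (simp add: ac_simps)
      also have "\<dots> = K * e / (K + 1)" using c(1) by (subst mult_divide_mult_cancel_left) auto
      finally show ?thesis by simp
    qed
    also have "\<dots> < e" using e c by (simp add: field_simps)
    finally have "norm (v' - v0) < e" using bd by linarith
    then show "dist (rinv (1 - cof \<mu> * X)) (rinv (1 - cof \<mu>0 * X)) < e"
      using rinv_eq[OF v'] rinv_eq[OF v0] by (simp add: dist_norm)
  qed
qed

lemma two_y_identity:
  fixes y :: "'b::ring_1"
  assumes "isinv (1 - y) P" "isinv (1 + y) P'"
  shows "y + y = (1 - y) * (P - P') * (1 + y)"
proof -
  have "(1 - y) * (P - P') * (1 + y) = ((1 - y) * P) * (1 + y) - (1 - y) * (P' * (1 + y))"
    by (simp add: algebra_simps)
  also have "\<dots> = (1 + y) - (1 - y)" using assms by (simp add: isinv_def)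
  finally show ?thesis by simp
qed

lemma norm_omega [simp]: "cmod (omega n) = 1"
proof -
  have "omega n = exp (\<i> * of_real (2 * pi / real n))" unfolding omega_def by (simp add: field_simps)
  then show ?thesis by simp
qed

lemma rickart_step:
  fixes X :: "'a::cstar_algebra uni"
  assumes R: "R > 0"
    and F: "\<And>\<mu>. cmod \<mu> \<le> R \<Longrightarrow> isinv (1 - cof \<mu> * X) (F \<mu>)"
    and uc: "\<And>\<mu>1 \<mu>2. cmod \<mu>1 \<le> R \<Longrightarrow> cmod \<mu>2 \<le> R \<Longrightarrow> cmod (\<mu>1 - \<mu>2) < \<delta> \<Longrightarrow> norm (F \<mu>1 - F \<mu>2) < 1/2"
    and n: "n \<ge> 1" and small: "cmod (exp (\<i> * of_real pi / of_nat n) - 1) * R < \<delta>"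
    and \<mu>: "cmod \<mu> \<le> R"
  shows "norm ((cof \<mu> * X) ^ n) \<noteq> 1"
proof
  assume y1: "norm ((cof \<mu> * X) ^ n) = 1"
  define \<zeta> where "\<zeta> = exp (\<i> * of_real pi / of_nat n)"
  define Y where "Y = cof \<mu> * X"
  define y where "y = Y ^ n"
  have nz: "cmod \<zeta> = 1"
  proof -
    have "\<zeta> = exp (\<i> * of_real (pi / real n))" unfolding \<zeta>_def by simp
    then show ?thesis by simp
  qed
  have zn: "\<zeta> ^ n = -1"
  proof -
    have "\<zeta> ^ n = exp (of_nat n * (\<i> * of_real pi / of_nat n))" unfolding \<zeta>_def exp_of_nat_mult ..
    also have "\<dots> = exp (\<i> * of_real pi)" using n by (simp add: field_simps)
    also have "\<dots> = -1" by (simp add: exp_Euler)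
    finally show ?thesis .
  qed
  define G where "G k = F (omega n ^ k * \<mu>)" for k
  define G' where "G' k = F (omega n ^ k * (\<zeta> * \<mu>))" for k
  have Gi: "isinv (1 - cof (omega n ^ k) * Y) (G k)" for k
  proof -
    have "cmod (omega n ^ k * \<mu>) \<le> R" using \<mu> by (simp add: norm_mult norm_power)
    from F[OF this] show ?thesis by (simp add: G_def Y_def cof_mult mult.assoc)
  qed
  have G'i: "isinv (1 - cof (omega n ^ k) * (cof \<zeta> * Y)) (G' k)" for k
  proof -
    have "cmod (omega n ^ k * (\<zeta> * \<mu>)) \<le> R" using \<mu> nz by (simp add: norm_mult norm_power)
    from F[OF this] show ?thesis by (simp add: G'_def Y_def cof_mult mult.assoc)
  qed
  define P where "P = cof (1 / of_nat n) * (\<Sum>k<n. G k)"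
  define P' where "P' = cof (1 / of_nat n) * (\<Sum>k<n. G' k)"
  have iP: "isinv (1 - y) P" unfolding P_def y_def by (rule roots_avg[OF n Gi])
  have "isinv (1 - (cof \<zeta> * Y) ^ n) P'" unfolding P'_def by (rule roots_avg[OF n G'i])
  moreover have "(cof \<zeta> * Y) ^ n = - y"
    by (simp add: power_cof_mult zn y_def cof_uminus)
  ultimately have iP': "isinv (1 + y) P'" by simp
  have dP: "norm (P - P') < 1/2"
  proof -
    have "P - P' = cof (1 / of_nat n) * (\<Sum>k<n. G k - G' k)"
      by (simp add: P_def P'_def sum_subtractf algebra_simps)
    then have "norm (P - P') = (1 / real n) * norm (\<Sum>k<n. G k - G' k)"
      by (simp add: norm_cof_mult norm_divide)
    also have "\<dots> \<le> (1 / real n) * (\<Sum>k<n. norm (G k - G' k))"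
      by (intro mult_left_mono norm_sum) simp
    also have "\<dots> < (1 / real n) * (\<Sum>k<n. 1/2)"
    proof (intro mult_strict_left_mono sum_strict_mono)
      fix k assume "k \<in> {..<n}"
      have a: "cmod (omega n ^ k * \<mu>) \<le> R" using \<mu> by (simp add: norm_mult norm_power)
      have b: "cmod (omega n ^ k * (\<zeta> * \<mu>)) \<le> R" using \<mu> nz by (simp add: norm_mult norm_power)
      have "cmod (omega n ^ k * \<mu> - omega n ^ k * (\<zeta> * \<mu>)) = cmod \<mu> * cmod (\<zeta> - 1)"
      proof -
        have "omega n ^ k * \<mu> - omega n ^ k * (\<zeta> * \<mu>) = - (omega n ^ k * \<mu> * (\<zeta> - 1))"
          by (simp add: algebra_simps)
        then show ?thesis by (simp only: norm_minus_cancel norm_mult norm_power norm_omega) simp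
      qed
      also have "\<dots> \<le> R * cmod (\<zeta> - 1)" using \<mu> by (simp add: mult_right_mono)
      also have "\<dots> < \<delta>" using small by (simp add: \<zeta>_def mult.commute)
      finally show "norm (G k - G' k) < 1/2" unfolding G_def G'_def by (rule uc[OF a b])
    qed (use n in \<open>auto simp: lessThan_empty_iff\<close>)
    also have "\<dots> = 1/2" using n by simp
    finally show ?thesis .
  qed
  have ny: "norm y = 1" using y1 by (simp add: y_def Y_def)
  have yy: "y + y = scaleR 2 y" by (simp add: scaleR_2)
  have "2 * norm y = norm (y + y)" unfolding yy by simp
  also have "\<dots> = norm ((1 - y) * (P - P') * (1 + y))" by (simp add: two_y_identity[OF iP iP'])
  also have "\<dots> \<le> norm ((1 - y) * (P - P')) * norm (1 + y)" by (rule norm_mult_ineq)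
  also have "\<dots> \<le> norm (1 - y) * norm (P - P') * norm (1 + y)"
    by (intro mult_right_mono norm_mult_ineq norm_ge_zero)
  also have "\<dots> \<le> 2 * norm (P - P') * 2"
  proof -
    have a: "norm (1 - y) \<le> 2" using norm_triangle_ineq4[of 1 y] ny by simp
    have b: "norm (1 + y) \<le> 2" using norm_triangle_ineq[of 1 y] ny by simp
    show ?thesis using a b by (intro mult_mono) auto
  qed
  finally show False using dP ny by simp
qed

theorem rickart:
  fixes X :: "'a::cstar_algebra uni"
  assumes R: "R > 0" and inv: "\<And>\<mu>. cmod \<mu> \<le> R \<Longrightarrow> \<exists>v. isinv (1 - cof \<mu> * X) v"
  shows "\<exists>N. \<forall>n\<ge>N. R ^ n * norm (X ^ n) < 1"
proof -
  define D where "D = cball (0::complex) R"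
  define F where "F \<mu> = rinv (1 - cof \<mu> * X)" for \<mu>
  have Fi: "isinv (1 - cof \<mu> * X) (F \<mu>)" if "cmod \<mu> \<le> R" for \<mu>
    using inv[OF that] rinv_eq unfolding F_def by blast
  have "continuous_on D F" unfolding F_def
    by (rule resolvent_cont) (use inv in \<open>auto simp: D_def\<close>)
  then have "uniformly_continuous_on D F"
    by (rule compact_uniformly_continuous) (simp add: D_def)
  then have "\<exists>d>0. \<forall>x\<in>D. \<forall>x'\<in>D. dist x' x < d \<longrightarrow> dist (F x') (F x) < 1/2"
    unfolding uniformly_continuous_on_def by (erule_tac x="1/2" in allE) simp
  then obtain \<delta> where \<delta>: "\<delta> > 0" and uc: "\<And>\<mu>1 \<mu>2. \<mu>1 \<in> D \<Longrightarrow> \<mu>2 \<in> D \<Longrightarrow> dist \<mu>2 \<mu>1 < \<delta> \<Longrightarrow> dist (F \<mu>2) (F \<mu>1) < 1/2"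
    by blast
  have uc': "norm (F \<mu>1 - F \<mu>2) < 1/2" if "cmod \<mu>1 \<le> R" "cmod \<mu>2 \<le> R" "cmod (\<mu>1 - \<mu>2) < \<delta>" for \<mu>1 \<mu>2
    using uc[of \<mu>2 \<mu>1] that by (simp add: D_def dist_norm)
  have l0: "(\<lambda>n. (\<i> * of_real pi) * (1 / of_nat n)) \<longlonglongrightarrow> (\<i> * of_real pi) * (0::complex)"
    by (intro tendsto_intros)
  have "(\<lambda>n. cmod (exp ((\<i> * of_real pi) * (1 / of_nat n)) - 1) * R) \<longlonglongrightarrow> cmod (exp ((\<i> * of_real pi) * 0) - 1) * R"
    by (intro tendsto_intros l0)
  then have lim: "(\<lambda>n. cmod (exp (\<i> * of_real pi / of_nat n) - 1) * R) \<longlonglongrightarrow> 0"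
    by simp
  then have "\<forall>\<^sub>F n in sequentially. cmod (exp (\<i> * of_real pi / of_nat n) - 1) * R < \<delta>"
    using \<delta> by (intro order_tendstoD(2)[OF lim]) simp
  then obtain N0 where N0: "\<And>n. n \<ge> N0 \<Longrightarrow> cmod (exp (\<i> * of_real pi / of_nat n) - 1) * R < \<delta>"
    unfolding eventually_sequentially by blast
  show ?thesis
  proof (intro exI allI impI)
    fix n assume nN: "max N0 1 \<le> n"
    then have n: "n \<ge> 1" and small: "cmod (exp (\<i> * of_real pi / of_nat n) - 1) * R < \<delta>"
      using N0 by auto
    show "R ^ n * norm (X ^ n) < 1"
    proof (rule ccontr)
      assume "\<not> R ^ n * norm (X ^ n) < 1"
      then have a1: "R ^ n * norm (X ^ n) \<ge> 1" by simp
      define a where "a = R ^ n * norm (X ^ n)"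
      define \<tau> where "\<tau> = root n (1 / a)"
      have a0: "a > 0" using a1 by (simp add: a_def)
      have \<tau>0: "\<tau> > 0" using n a0 by (simp add: \<tau>_def real_root_gt_zero)
      have \<tau>1: "\<tau> \<le> 1" using n a1 by (simp add: \<tau>_def a_def)
      have \<tau>n: "\<tau> ^ n = 1 / a" using n a0 by (simp add: \<tau>_def)
      define \<mu> where "\<mu> = complex_of_real (\<tau> * R)"
      have cm: "cmod \<mu> = \<tau> * R" using \<tau>0 R unfolding \<mu>_def norm_of_real by simp
      have m: "cmod \<mu> \<le> R" unfolding cm using \<tau>1 R by (simp add: mult_le_cancel_right1)
      have "norm ((cof \<mu> * X) ^ n) = (\<tau> * R) ^ n * norm (X ^ n)"
        by (simp add: power_cof_mult norm_cof_mult norm_power cm)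
      also have "\<dots> = \<tau> ^ n * a" by (simp add: a_def power_mult_distrib)
      also have "\<dots> = 1" using \<tau>n a0 by simp
      finally show False using rickart_step[OF R Fi uc' n small m] by simp
    qed
  qed
qed


section \<open>Spectrum of self-adjoint elements is real\<close>

lemma isinv_cof_scale:
  assumes "isinv (1 - u) S" "\<nu> \<noteq> 0"
  shows "isinv (cof \<nu> * (1 - u)) (S * cof (1 / \<nu>) :: 'a::cstar_algebra uni)"
proof -
  have c1: "cof \<nu> * cof (1 / \<nu>) = (1 :: 'a uni)" "cof (1 / \<nu>) * cof \<nu> = (1 :: 'a uni)"
    using assms(2) by (simp_all add: cof_mult[symmetric])
  have "cof \<nu> * (1 - u) * (S * cof (1 / \<nu>)) = cof \<nu> * ((1 - u) * S) * cof (1 / \<nu>)"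
    by (simp add: mult.assoc)
  also have "\<dots> = 1" using assms(1) c1 by (simp add: isinv_def)
  finally have l: "cof \<nu> * (1 - u) * (S * cof (1 / \<nu>)) = 1" .
  have "S * cof (1 / \<nu>) * (cof \<nu> * (1 - u)) = S * (cof (1 / \<nu>) * cof \<nu>) * (1 - u)"
    by (simp add: mult.assoc)
  also have "\<dots> = 1" using assms(1) c1 by (simp add: isinv_def)
  finally show ?thesis using l by (simp add: isinv_def)
qed

lemma inv_large:
  fixes b :: "'a::cstar_algebra"
  assumes "cmod z > norm b"
  shows "\<exists>v. isinv (cof z - emb b) v"
proof -
  have l0: "z \<noteq> 0" using assms norm_ge_zero[of b] by auto
  define u where "u = cof (1 / z) * emb b"
  have "norm u = norm b / cmod z" by (simp add: u_def norm_cof_mult norm_divide)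
  then have "norm u < 1" using assms l0 by (simp add: divide_less_eq)
  from neumann_small(1)[OF this] have i: "isinv (1 - u) (\<Sum>n. u ^ n)" .
  have "cof z * (1 - u) = cof z - emb b"
    using l0 by (simp add: u_def algebra_simps mult.assoc[symmetric] cof_mult[symmetric])
  with isinv_cof_scale[OF i l0] show ?thesis by auto
qed

definition act :: "'a::cstar_algebra uni \<Rightarrow> 'a \<Rightarrow> 'a" where
  "act u y = scaleC (sc u) y + ve u * y"

lemma act_mult: "act (u * v) y = act u (act v y)"
  by (simp add: act_def scaleC_add_right scaleC_scaleC mult_scaleC_left mult_scaleC_right
      distrib_left distrib_right mult.assoc ac_simps)

lemma sc_power: "sc (u ^ n) = sc u ^ n"
  by (induction n) simp_all

lemma opnorm_inv:
  fixes a :: "'a::cstar_algebra"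
  assumes op: "\<And>y. norm (scaleC \<gamma> y + a * y) \<le> K * norm y" and K: "0 \<le> K"
    and g: "cmod \<gamma> < cmod \<nu>" and k: "K < cmod \<nu>"
  shows "\<exists>v. isinv (cof \<nu> - Uni \<gamma> a) v"
proof -
  define T where "T = Uni \<gamma> a"
  have actT: "norm (act (T ^ n) y) \<le> K ^ n * norm y" for n y
  proof (induction n arbitrary: y)
    case 0 then show ?case by (simp add: act_def scaleC_one)
  next
    case (Suc n)
    have "norm (act (T ^ Suc n) y) = norm (act T (act (T ^ n) y))" by (simp add: act_mult)
    also have "\<dots> \<le> K * norm (act (T ^ n) y)" using op by (simp add: act_def T_def)
    also have "\<dots> \<le> K * (K ^ n * norm y)" by (rule mult_left_mono[OF Suc K])
    finally show ?case by (simp add: mult.assoc)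
  qed
  have nT: "norm (T ^ n) \<le> 2 * cmod \<gamma> ^ n + K ^ n" for n
  proof -
    have sT: "sc (T ^ n) = \<gamma> ^ n" by (simp add: sc_power T_def)
    have "norm (ve (T ^ n)) \<le> K ^ n + cmod \<gamma> ^ n"
    proof (rule norm_le_sup_mult)
      fix y
      have "ve (T ^ n) * y = act (T ^ n) y - scaleC (\<gamma> ^ n) y" by (simp add: act_def sT)
      then have "norm (ve (T ^ n) * y) \<le> norm (act (T ^ n) y) + norm (scaleC (\<gamma> ^ n) y)"
        by (simp add: norm_triangle_ineq4)
      also have "\<dots> \<le> K ^ n * norm y + cmod \<gamma> ^ n * norm y"
        using actT[of n y] by (simp add: norm_scaleC norm_power)
      finally show "norm (ve (T ^ n) * y) \<le> (K ^ n + cmod \<gamma> ^ n) * norm y" by (simp add: distrib_right)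
    qed (simp add: K)
    then show ?thesis by (simp add: norm_uni_def sT norm_power)
  qed
  have nu0: "\<nu> \<noteq> 0" using g by auto
  define u where "u = cof (1 / \<nu>) * T"
  have un: "norm (u ^ n) \<le> 2 * (cmod \<gamma> / cmod \<nu>) ^ n + (K / cmod \<nu>) ^ n" for n
  proof -
    have "norm (u ^ n) = (1 / cmod \<nu>) ^ n * norm (T ^ n)"
      by (simp add: u_def power_cof_mult norm_cof_mult norm_power norm_divide)
    also have "\<dots> \<le> (1 / cmod \<nu>) ^ n * (2 * cmod \<gamma> ^ n + K ^ n)"
      by (intro mult_left_mono nT) simp
    also have "\<dots> = 2 * (cmod \<gamma> / cmod \<nu>) ^ n + (K / cmod \<nu>) ^ n"
      by (simp add: power_divide add_divide_distrib)
    finally show ?thesis .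
  qed
  have s: "summable (\<lambda>n. 2 * (cmod \<gamma> / cmod \<nu>) ^ n + (K / cmod \<nu>) ^ n)"
    using g k nu0 K by (intro summable_add summable_mult summable_geometric) (auto simp: divide_less_eq)
  have "summable (\<lambda>n. norm (u ^ n))"
    by (rule summable_comparison_test[OF _ s]) (use un in auto)
  from neumann[OF this] have i: "isinv (1 - u) (\<Sum>n. u ^ n)" .
  have "cof \<nu> * (1 - u) = cof \<nu> - T"
    using nu0 by (simp add: u_def algebra_simps mult.assoc[symmetric] cof_mult[symmetric])
  with isinv_cof_scale[OF i nu0] show ?thesis unfolding T_def by auto
qed


lemma opbound_sa:
  fixes b y :: "'a::cstar_algebra"
  assumes sa: "adj b = b"
  shows "norm (scaleC (\<i> * of_real t) y + b * y) \<le> sqrt (t\<^sup>2 + (norm b)\<^sup>2) * norm y"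
proof -
  define c where "c = \<i> * complex_of_real t"
  define w where "w = scaleC c y + b * y"
  have cc: "cnj c = - c" by (simp add: c_def)
  have aw: "adj w = scaleC (- c) (adj y) + adj y * b"
    by (simp add: w_def adj_add adj_scaleC adj_mult sa cc)
  have "adj w * w = (scaleC (- c) (adj y) + adj y * b) * (scaleC c y + b * y)"
    unfolding aw by (simp only: w_def)
  also have "\<dots> = scaleC (- c) (adj y) * scaleC c y + scaleC (- c) (adj y) * (b * y)
      + (adj y * b * scaleC c y + adj y * b * (b * y))"
    by (simp only: distrib_left distrib_right add_ac)
  also have "\<dots> = scaleC (- c * c) (adj y * y) + (scaleC (- c) (adj y * (b * y)) + scaleC c (adj y * (b * y)))
      + adj (b * y) * (b * y)"
    by (simp add: mult_scaleC_left mult_scaleC_right scaleC_scaleC mult.assoc adj_mult sa add.assoc)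
  also have "scaleC (- c) (adj y * (b * y)) + scaleC c (adj y * (b * y)) = 0"
    by (simp add: scaleC_add_left[symmetric])
  also have "- c * c = complex_of_real (t\<^sup>2)"
  proof -
    have "- c * c = - (\<i> * \<i>) * (complex_of_real t * complex_of_real t)" by (simp add: c_def ac_simps)
    then show ?thesis by (simp add: power2_eq_square)
  qed
  finally have e: "adj w * w = scaleR (t\<^sup>2) (adj y * y) + adj (b * y) * (b * y)"
    by (simp only: scaleC_of_real add_0_right add_0_left)
  have "norm w * norm w = norm (adj w * w)" by (simp add: cstar_identity)
  also have "\<dots> \<le> t\<^sup>2 * norm (adj y * y) + norm (adj (b * y) * (b * y))"
    unfolding e using norm_triangle_ineq by (simp add: norm_triangle_le)
  also have "\<dots> = t\<^sup>2 * (norm y)\<^sup>2 + (norm (b * y))\<^sup>2"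
    by (simp add: cstar_identity power2_eq_square)
  also have "\<dots> \<le> t\<^sup>2 * (norm y)\<^sup>2 + (norm b * norm y)\<^sup>2"
    by (intro add_left_mono power_mono norm_mult_ineq) simp
  also have "\<dots> = (sqrt (t\<^sup>2 + (norm b)\<^sup>2) * norm y)\<^sup>2"
    by (simp add: power_mult_distrib algebra_simps)
  finally have "(norm w)\<^sup>2 \<le> (sqrt (t\<^sup>2 + (norm b)\<^sup>2) * norm y)\<^sup>2" by (simp add: power2_eq_square)
  then show ?thesis unfolding w_def[symmetric] c_def[symmetric]
    by (rule power2_le_imp_le) simp
qed

lemma inv_nonreal:
  fixes b :: "'a::cstar_algebra"
  assumes sa: "adj b = b" and im: "Im z \<noteq> 0"
  shows "\<exists>v. isinv (cof z - emb b) v"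
proof -
  define \<beta> where "\<beta> = Im z"
  define t where "t = ((norm b)\<^sup>2 + 1) / (2 * \<beta>)"
  define \<gamma> where "\<gamma> = \<i> * complex_of_real t"
  define \<nu> where "\<nu> = z + \<gamma>"
  define K where "K = sqrt (t\<^sup>2 + (norm b)\<^sup>2)"
  have bt: "2 * \<beta> * t = (norm b)\<^sup>2 + 1" using im by (simp add: t_def \<beta>_def)
  have nu2: "(cmod \<nu>)\<^sup>2 = (Re z)\<^sup>2 + \<beta>\<^sup>2 + (norm b)\<^sup>2 + 1 + t\<^sup>2"
    unfolding cmod_power2 using bt by (simp add: \<nu>_def \<gamma>_def \<beta>_def power2_eq_square algebra_simps)
  have K0: "0 \<le> K" by (simp add: K_def)
  have Kl: "K < cmod \<nu>"
  proof (rule power_less_imp_less_base[of _ 2])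
    have K2: "K\<^sup>2 = t\<^sup>2 + (norm b)\<^sup>2" by (simp add: K_def)
    show "K ^ 2 < cmod \<nu> ^ 2" using nu2 K2 zero_le_power2[of "Re z"] zero_le_power2[of \<beta>] by linarith
  qed simp
  have gl: "cmod \<gamma> < cmod \<nu>"
  proof (rule power_less_imp_less_base[of _ 2])
    have g2: "(cmod \<gamma>)\<^sup>2 = t\<^sup>2" by (simp add: \<gamma>_def norm_mult)
    show "cmod \<gamma> ^ 2 < cmod \<nu> ^ 2" using nu2 g2 zero_le_power2[of "Re z"] zero_le_power2[of \<beta>]
      zero_le_power2[of "norm b"] by linarith
  qed simp
  have op: "norm (scaleC \<gamma> y + b * y) \<le> K * norm y" for y
    unfolding \<gamma>_def K_def by (rule opbound_sa[OF sa])
  obtain v where "isinv (cof \<nu> - Uni \<gamma> b) v" using opnorm_inv[OF op K0 gl Kl] by blast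
  moreover have "cof \<nu> - Uni \<gamma> b = cof z - emb b" by (simp add: uni_eq_iff \<nu>_def)
  ultimately show ?thesis by auto
qed

lemma inv_spec:
  fixes b :: "'a::cstar_algebra"
  assumes sa: "adj b = b" and nb: "norm b \<le> r"
    and z: "\<And>x. z = complex_of_real x \<Longrightarrow> \<bar>x\<bar> > r"
  shows "\<exists>v. isinv (emb b - cof z) v"
proof -
  have "\<exists>v. isinv (cof z - emb b) v"
  proof (cases "Im z = 0")
    case True
    then have "z = complex_of_real (Re z)" by (simp add: complex_eq_iff)
    from z[OF this] nb have "cmod z > norm b"
      using True by (simp add: cmod_def)
    then show ?thesis by (rule inv_large)
  next
    case False then show ?thesis by (rule inv_nonreal[OF sa])
  qed
  then obtain v where "isinv (cof z - emb b) v" by blast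
  then have "isinv (emb b - cof z) (- v)" by (simp add: isinv_def algebra_simps)
  then show ?thesis by blast
qed


definition pev :: "complex poly \<Rightarrow> 'a::cstar_algebra uni \<Rightarrow> 'a uni" where
  "pev q u = (\<Sum>i<Suc (degree q). cof (coeff q i) * u ^ i)"

lemma pev_bound:
  assumes "degree q < N"
  shows "pev q u = (\<Sum>i<N. cof (coeff q i) * u ^ i)"
  unfolding pev_def
proof (rule sum.mono_neutral_left)
  show "\<forall>i\<in>{..<N} - {..<Suc (degree q)}. cof (coeff q i) * u ^ i = 0"
    by (auto simp: coeff_eq_0)
qed (use assms in auto)

lemma cof_shift: "cof c * u ^ Suc i = u * (cof c * u ^ i :: 'a::cstar_algebra uni)"
proof -
  have "cof c * u ^ Suc i = (cof c * u) * u ^ i" by (simp add: mult.assoc)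
  also have "\<dots> = (u * cof c) * u ^ i" by (simp only: cof_commute[of c u])
  also have "\<dots> = u * (cof c * u ^ i)" by (simp add: mult.assoc)
  finally show ?thesis .
qed

lemma pev_pCons: "pev (pCons c q) u = cof c + u * pev q u"
proof -
  have d: "degree (pCons c q) < Suc (Suc (degree q))" by (simp add: less_Suc_eq_le)
  have "pev (pCons c q) u = (\<Sum>i<Suc (Suc (degree q)). cof (coeff (pCons c q) i) * u ^ i)"
    by (rule pev_bound[OF d])
  also have "\<dots> = cof c + (\<Sum>i<Suc (degree q). cof (coeff q i) * u ^ Suc i)"
    by (subst sum.lessThan_Suc_shift) simp
  also have "(\<Sum>i<Suc (degree q). cof (coeff q i) * u ^ Suc i) = u * pev q u"
    unfolding pev_def sum_distrib_left
    by (intro sum.cong refl) (rule cof_shift)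
  finally show ?thesis .
qed

lemma pev_0 [simp]: "pev 0 u = 0"
  by (simp add: pev_def)

lemma pev_const: "pev [:c:] u = cof c"
  by (simp add: pev_pCons)

lemma pev_add: "pev (p + q) u = pev p u + pev q u"
proof -
  define N where "N = Suc (max (degree p) (degree q))"
  have "degree (p + q) < N" unfolding N_def using degree_add_le[of p "max (degree p) (degree q)" q]
    by auto
  then have "pev (p + q) u = (\<Sum>i<N. cof (coeff (p + q) i) * u ^ i)" by (rule pev_bound)
  also have "\<dots> = (\<Sum>i<N. cof (coeff p i) * u ^ i) + (\<Sum>i<N. cof (coeff q i) * u ^ i)"
    by (simp add: cof_add distrib_right sum.distrib)
  also have "\<dots> = pev p u + pev q u"
  proof -
    have "pev p u = (\<Sum>i<N. cof (coeff p i) * u ^ i)" by (rule pev_bound) (simp add: N_def)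
    moreover have "pev q u = (\<Sum>i<N. cof (coeff q i) * u ^ i)" by (rule pev_bound) (simp add: N_def)
    ultimately show ?thesis by simp
  qed
  finally show ?thesis .
qed

lemma pev_smult: "pev (smult c p) u = cof c * pev p u"
proof -
  have "degree (smult c p) < Suc (degree p)" using degree_smult_le[of c p] by simp
  then have "pev (smult c p) u = (\<Sum>i<Suc (degree p). cof (coeff (smult c p) i) * u ^ i)" by (rule pev_bound)
  also have "\<dots> = cof c * pev p u"
    unfolding pev_def sum_distrib_left by (intro sum.cong refl) (simp add: cof_mult mult.assoc)
  finally show ?thesis .
qed

lemma pev_uminus: "pev (- p) u = - pev p u"
  using pev_smult[of "-1" p u] by (simp add: cof_uminus)

lemma pev_diff: "pev (p - q) u = pev p u - pev q u"
  using pev_add[of p "- q" u] by (simp add: pev_uminus)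

lemma pev_one [simp]: "pev 1 u = 1"
  using pev_const[of 1 u] by (simp add: one_pCons)

lemma pev_mult: "pev (p * q) u = pev p u * pev q u"
proof (induction p)
  case 0 then show ?case by simp
next
  case (pCons a p)
  have "pev (pCons a p * q) u = cof a * pev q u + u * pev (p * q) u"
    by (simp add: pev_add pev_smult pev_pCons)
  also have "\<dots> = (cof a + u * pev p u) * pev q u"
    by (simp add: pCons.IH distrib_right mult.assoc)
  finally show ?case by (simp add: pev_pCons)
qed

lemma pev_linear: "pev [:- z, 1:] u = u - cof z"
  by (simp add: pev_pCons pev_const cof_uminus)

lemma sc_pev: "sc (pev q u) = poly q (sc u)"
  by (induction q) (simp_all add: pev_pCons)

lemma pev_commute: "u * pev q u = pev q u * u"
proof (induction q)
  case (pCons a q)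
  have "u * pev (pCons a q) u = u * cof a + u * (u * pev q u)" by (simp add: pev_pCons distrib_left)
  also have "\<dots> = cof a * u + u * (pev q u * u)" by (simp add: cof_commute pCons.IH)
  also have "\<dots> = (cof a + u * pev q u) * u" by (simp add: distrib_right mult.assoc)
  finally show ?case by (simp add: pev_pCons)
qed simp

lemma pev_power_inv:
  assumes "isinv (pev q u) v"
  shows "\<exists>w. isinv (pev (q ^ k) u) w"
proof (induction k)
  case 0 then show ?case by (auto simp: isinv_def intro: exI[of _ 1])
next
  case (Suc k)
  then obtain w where "isinv (pev (q ^ k) u) w" by blast
  from isinv_mult[OF assms this] show ?case by (auto simp: pev_mult)
qed

lemma pev_prod_inv:
  assumes "finite S" "\<And>z. z \<in> S \<Longrightarrow> \<exists>v. isinv (pev (f z) u) v"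
  shows "\<exists>v. isinv (pev (\<Prod>z\<in>S. f z) u) v"
  using assms
proof (induction S rule: finite_induct)
  case empty then show ?case by (auto simp: isinv_def intro: exI[of _ 1])
next
  case (insert x S)
  obtain v1 where v1: "isinv (pev (f x) u) v1" using insert by blast
  obtain v2 where v2: "isinv (pev (\<Prod>z\<in>S. f z) u) v2" using insert by blast
  from isinv_mult[OF v1 v2] insert(1,2) show ?case by (auto simp: pev_mult)
qed

definition uadj :: "'a::cstar_algebra uni \<Rightarrow> 'a uni" where
  "uadj u = Uni (cnj (sc u)) (adj (ve u))"

lemma uadj_mult: "uadj (u * v) = uadj v * uadj u"
  by (simp add: uadj_def uni_eq_iff adj_add adj_scaleC adj_mult ac_simps)

lemma uadj_add: "uadj (u + v) = uadj u + uadj v"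
  by (simp add: uadj_def uni_eq_iff adj_add)

lemma uadj_zero [simp]: "uadj 0 = 0"
  by (simp add: uadj_def uni_eq_iff)

lemma uadj_cof: "uadj (cof c) = cof (cnj c)"
  by (simp add: uadj_def uni_eq_iff)

lemma uadj_emb: "uadj (emb a) = emb (adj a)"
  by (simp add: uadj_def uni_eq_iff)

lemma uadj_pev:
  assumes real: "\<And>i. cnj (coeff q i) = coeff q i" and sa: "uadj u = u"
  shows "uadj (pev q u) = pev q u"
  using real
proof (induction q)
  case (pCons a q)
  have a: "cnj a = a" using pCons.prems[of 0] by simp
  have q: "cnj (coeff q i) = coeff q i" for i using pCons.prems[of "Suc i"] by simp
  show ?case
    by (simp add: pev_pCons uadj_add uadj_mult uadj_cof a pCons.IH[OF q] sa pev_commute)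
qed simp


section \<open>Norm bound for polynomials in a self-adjoint element\<close>

lemma sa_pow2:
  fixes a :: "'a::cstar_algebra"
  assumes "adj a = a"
  shows "norm (emb a ^ (2 ^ k)) = norm a ^ (2 ^ k)"
  using assms
proof (induction k arbitrary: a)
  case 0 then show ?case by simp
next
  case (Suc k)
  have sq: "emb a ^ 2 = emb (a * a)" by (simp add: power2_eq_square emb_mult)
  have "emb a ^ (2 ^ Suc k) = (emb a ^ 2) ^ (2 ^ k)" by (simp add: power_mult[symmetric])
  also have "\<dots> = emb (a * a) ^ (2 ^ k)" by (simp add: sq)
  finally have e: "emb a ^ (2 ^ Suc k) = emb (a * a) ^ (2 ^ k)" .
  have sa2: "adj (a * a) = a * a" using Suc.prems by (simp add: adj_mult)
  have na: "norm (a * a) = norm a ^ 2"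
    using cstar_identity[of a] Suc.prems by (simp add: power2_eq_square)
  show ?case unfolding e Suc.IH[OF sa2] na by (simp add: power_mult[symmetric])
qed

lemma poly_map_of_real: "poly (map_poly complex_of_real p) (complex_of_real x) = complex_of_real (poly p x)"
  by (induction p) (auto simp: map_poly_pCons)

lemma isinv_cof: "c \<noteq> 0 \<Longrightarrow> isinv (cof c :: 'a::cstar_algebra uni) (cof (1 / c))"
  by (simp add: isinv_def cof_mult[symmetric])

theorem spec_bound:
  fixes b :: "'a::cstar_algebra" and p :: "real poly"
  assumes sa: "adj b = b" and nb: "norm b \<le> 1" and p0: "poly p 0 = 0"
    and pm: "\<And>t. -1 \<le> t \<Longrightarrow> t \<le> 1 \<Longrightarrow> \<bar>poly p t\<bar> \<le> m"
  shows "norm (ve (pev (map_poly complex_of_real p) (emb b))) \<le> m"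
proof -
  define P where "P = map_poly complex_of_real p"
  define X where "X = pev P (emb b)"
  define s where "s = ve X"
  have scX: "sc X = 0"
    using poly_map_of_real[of p 0] p0 by (simp add: X_def sc_pev P_def)
  have Xs: "X = emb s" by (simp add: uni_eq_iff s_def scX)
  have realP: "cnj (coeff P i) = coeff P i" for i by (simp add: P_def coeff_map_poly)
  have "uadj X = X" unfolding X_def by (rule uadj_pev[OF realP]) (simp add: uadj_emb sa)
  then have sas: "adj s = s" by (simp add: Xs uadj_emb emb_inj)
  have m0: "m \<ge> 0" using pm[of 0] by simp
  have key: "R * norm s < 1" if R: "R > 0" and Rm: "R * m < 1" for R
  proof -
    have inv: "\<exists>v. isinv (1 - cof \<mu> * X) v" if \<mu>: "cmod \<mu> \<le> R" for \<mu>
    proof -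
      define Q where "Q = 1 - smult \<mu> P"
      have pevQ: "pev Q (emb b) = 1 - cof \<mu> * X"
        by (simp add: Q_def pev_diff pev_smult X_def)
      have Q0: "poly Q 0 = 1"
        using poly_map_of_real[of p 0] p0 by (simp add: Q_def P_def)
      then have Qnz: "Q \<noteq> 0" by auto
      have roots: "\<exists>v. isinv (pev ([:- z, 1:] ^ order z Q) (emb b)) v" if z: "poly Q z = 0" for z
      proof -
        have "\<exists>v. isinv (emb b - cof z) v"
        proof (rule inv_spec[OF sa nb])
          fix x assume zx: "z = complex_of_real x"
          show "\<bar>x\<bar> > 1"
          proof (rule ccontr)
            assume "\<not> \<bar>x\<bar> > 1"
            then have "\<bar>poly p x\<bar> \<le> m" using pm[of x] by auto
            then have "cmod (\<mu> * complex_of_real (poly p x)) \<le> R * m"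
              using mult_mono[OF \<mu> \<open>\<bar>poly p x\<bar> \<le> m\<close> _ abs_ge_zero] R by (simp add: norm_mult)
            then have "cmod (\<mu> * complex_of_real (poly p x)) < 1" using Rm by linarith
            moreover have "poly Q z = 1 - \<mu> * complex_of_real (poly p x)"
              by (simp add: Q_def P_def zx poly_map_of_real)
            ultimately show False using z by auto
          qed
        qed
        then obtain v where "isinv (pev [:- z, 1:] (emb b)) v" by (auto simp: pev_linear)
        then show ?thesis by (rule pev_power_inv)
      qed
      have fin: "finite {z. poly Q z = 0}" by (rule poly_roots_finite[OF Qnz])
      obtain w where w: "isinv (pev (\<Prod>z | poly Q z = 0. [:- z, 1:] ^ order z Q) (emb b)) w"
        using pev_prod_inv[OF fin, of "\<lambda>z. [:- z, 1:] ^ order z Q" "emb b"] roots by auto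
      have lc: "lead_coeff Q \<noteq> 0" using Qnz by simp
      have "pev Q (emb b) = cof (lead_coeff Q) * pev (\<Prod>z | poly Q z = 0. [:- z, 1:] ^ order z Q) (emb b)"
        by (subst (1) complex_poly_decompose[symmetric]) (simp add: pev_smult)
      with isinv_mult[OF isinv_cof[OF lc] w] show ?thesis by (auto simp: pevQ)
    qed
    obtain N where N: "\<And>n. n \<ge> N \<Longrightarrow> R ^ n * norm (X ^ n) < 1"
      using rickart[OF R inv] by blast
    have "N \<le> 2 ^ N" using less_exp[of N] by simp
    from N[OF this] have "R ^ (2 ^ N) * norm s ^ (2 ^ N) < 1"
      by (simp add: Xs sa_pow2[OF sas])
    then have "(R * norm s) ^ (2 ^ N) < 1" by (simp add: power_mult_distrib)
    then show ?thesis
      by (meson not_less one_le_power)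
  qed
  show ?thesis
  proof (rule ccontr)
    assume "\<not> ?thesis"
    then have ms: "m < norm s" by (simp add: s_def X_def P_def)
    then have "norm s > 0" using m0 by linarith
    with key[of "1 / norm s"] ms show False by (simp add: divide_less_eq)
  qed
qed


section \<open>A minimal continuous functional calculus\<close>

lemma creal_mult: "map_poly complex_of_real (p * q) = map_poly complex_of_real p * map_poly complex_of_real q"
  by (rule poly_eqI) (simp add: coeff_map_poly coeff_mult)

lemma creal_diff: "map_poly complex_of_real (p - q) = map_poly complex_of_real p - map_poly complex_of_real q"
  by (rule poly_eqI) (simp add: coeff_map_poly)

lemma creal_X: "map_poly complex_of_real [:0, 1:] = [:0, 1:]"
  by (simp add: map_poly_pCons)

definition PE :: "'a::cstar_algebra \<Rightarrow> real poly \<Rightarrow> 'a" where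
  "PE b p = ve (pev (map_poly complex_of_real p) (emb b))"

lemma emb_PE:
  assumes "poly p 0 = 0"
  shows "emb (PE b p) = pev (map_poly complex_of_real p) (emb b)"
proof -
  have "sc (pev (map_poly complex_of_real p) (emb b)) = 0"
    using poly_map_of_real[of p 0] assms by (simp add: sc_pev)
  then show ?thesis by (simp add: PE_def uni_eq_iff)
qed

lemma PE_mult:
  assumes "poly p 0 = 0" "poly q 0 = 0"
  shows "PE b (p * q) = PE b p * PE b q"
proof -
  have "emb (PE b (p * q)) = emb (PE b p) * emb (PE b q)"
    using assms by (simp add: emb_PE creal_mult pev_mult)
  then show ?thesis by (simp add: emb_mult[symmetric] emb_inj)
qed

lemma PE_diff:
  assumes "poly p 0 = 0" "poly q 0 = 0"
  shows "PE b (p - q) = PE b p - PE b q"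
proof -
  have "emb (PE b (p - q)) = emb (PE b p) - emb (PE b q)"
    using assms by (simp add: emb_PE creal_diff pev_diff)
  then show ?thesis by (simp add: emb_diff[symmetric] emb_inj)
qed

lemma PE_X: "PE b [:0, 1:] = b"
  by (simp add: PE_def creal_X pev_pCons)

definition approx :: "'a::cstar_algebra \<Rightarrow> (real \<Rightarrow> real) \<Rightarrow> 'a \<Rightarrow> bool" where
  "approx b F z \<longleftrightarrow> (\<forall>e>0. \<exists>p. poly p 0 = 0 \<and> (\<forall>t\<in>{-1..1}. \<bar>F t - poly p t\<bar> \<le> e) \<and> norm (z - PE b p) \<le> e)"

context
  fixes b :: "'a::cstar_algebra"
  assumes sa: "adj b = b" and nb: "norm b \<le> 1"
begin

lemma PE_bound:
  assumes "poly p 0 = 0" "\<And>t. t \<in> {-1..1} \<Longrightarrow> \<bar>poly p t\<bar> \<le> m"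
  shows "norm (PE b p) \<le> m"
  unfolding PE_def by (rule spec_bound[OF sa nb assms(1)]) (use assms(2) in auto)

lemma approx_unique:
  assumes "approx b F z" "approx b F z'"
  shows "z = z'"
proof -
  have four: "norm (z - z') \<le> 4 * e" if e: "e > 0" for e
  proof -
    obtain p where p: "poly p 0 = 0" "\<forall>t\<in>{-1..1}. \<bar>F t - poly p t\<bar> \<le> e" "norm (z - PE b p) \<le> e"
      using assms(1) e unfolding approx_def by blast
    obtain q where q: "poly q 0 = 0" "\<forall>t\<in>{-1..1}. \<bar>F t - poly q t\<bar> \<le> e" "norm (z' - PE b q) \<le> e"
      using assms(2) e unfolding approx_def by blast
    have "norm (PE b p - PE b q) = norm (PE b (p - q))" using p q by (simp add: PE_diff)
    also have "\<dots> \<le> 2 * e"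
    proof (rule PE_bound)
      fix t :: real assume t: "t \<in> {-1..1}"
      have "\<bar>poly p t - poly q t\<bar> \<le> \<bar>F t - poly p t\<bar> + \<bar>F t - poly q t\<bar>" by linarith
      moreover have "\<bar>F t - poly p t\<bar> \<le> e" "\<bar>F t - poly q t\<bar> \<le> e" using p(2) q(2) t by auto
      ultimately show "\<bar>poly (p - q) t\<bar> \<le> 2 * e" by simp
    qed (use p q in simp)
    finally have "norm (PE b p - PE b q) \<le> 2 * e" .
    moreover have "norm (z - z') \<le> norm (z - PE b p) + norm (PE b p - PE b q) + norm (z' - PE b q)"
    proof -
      have "z - z' = ((z - PE b p) + (PE b p - PE b q)) - (z' - PE b q)" by simp
      then have "norm (z - z') \<le> norm ((z - PE b p) + (PE b p - PE b q)) + norm (z' - PE b q)"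
        by (metis norm_triangle_ineq4)
      also have "\<dots> \<le> norm (z - PE b p) + norm (PE b p - PE b q) + norm (z' - PE b q)"
        using norm_triangle_ineq[of "z - PE b p" "PE b p - PE b q"] by linarith
      finally show ?thesis .
    qed
    ultimately show ?thesis using p(3) q(3) by linarith
  qed
  have "norm (z - z') \<le> 0"
  proof (rule field_le_epsilon)
    fix e :: real assume "e > 0"
    then have "norm (z - z') \<le> 4 * (e / 4)" using four[of "e/4"] by simp
    then show "norm (z - z') \<le> 0 + e" by simp
  qed
  then show ?thesis by simp
qed

lemma approx_bound:
  assumes "approx b F z" "\<And>t. t \<in> {-1..1} \<Longrightarrow> \<bar>F t\<bar> \<le> M"
  shows "norm z \<le> M"
proof (rule field_le_epsilon)
  fix e :: real assume e: "e > 0"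
  obtain p where p: "poly p 0 = 0" "\<forall>t\<in>{-1..1}. \<bar>F t - poly p t\<bar> \<le> e/2" "norm (z - PE b p) \<le> e/2"
    using assms(1) e unfolding approx_def by (meson half_gt_zero)
  have "norm (PE b p) \<le> M + e/2"
  proof (rule PE_bound[OF p(1)])
    fix t :: real assume t: "t \<in> {-1..1}"
    have "\<bar>F t - poly p t\<bar> \<le> e/2" using p(2) t by auto
    then show "\<bar>poly p t\<bar> \<le> M + e/2" using assms(2)[OF t] by arith
  qed
  moreover have "norm z \<le> norm (z - PE b p) + norm (PE b p)" using norm_triangle_sub[of z "PE b p"] by linarith
  ultimately show "norm z \<le> M + e" using p(3) by linarith
qed

lemma approx_cong:
  assumes "approx b F z" "\<And>t. t \<in> {-1..1} \<Longrightarrow> F t = G t"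
  shows "approx b G z"
  unfolding approx_def
proof (intro allI impI)
  fix e :: real assume e: "e > 0"
  obtain p where p: "poly p 0 = 0" "\<forall>t\<in>{-1..1}. \<bar>F t - poly p t\<bar> \<le> e" "norm (z - PE b p) \<le> e"
    using assms(1) e unfolding approx_def by blast
  have "\<forall>t\<in>{-1..1}. \<bar>G t - poly p t\<bar> \<le> e" using p(2) assms(2) by simp
  then show "\<exists>p. poly p 0 = 0 \<and> (\<forall>t\<in>{-1..1}. \<bar>G t - poly p t\<bar> \<le> e) \<and> norm (z - PE b p) \<le> e"
    using p by blast
qed

lemma approx_X: "approx b (\<lambda>t. t) b"
  unfolding approx_def
  by (intro allI impI exI[of _ "[:0, 1:]"]) (simp add: PE_X)

lemma approx_diff:
  assumes "approx b F z" "approx b G w"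
  shows "approx b (\<lambda>t. F t - G t) (z - w)"
  unfolding approx_def
proof (intro allI impI)
  fix e :: real assume e: "e > 0"
  obtain p where p: "poly p 0 = 0" "\<forall>t\<in>{-1..1}. \<bar>F t - poly p t\<bar> \<le> e/2" "norm (z - PE b p) \<le> e/2"
    using assms(1) e unfolding approx_def by (meson half_gt_zero)
  obtain q where q: "poly q 0 = 0" "\<forall>t\<in>{-1..1}. \<bar>G t - poly q t\<bar> \<le> e/2" "norm (w - PE b q) \<le> e/2"
    using assms(2) e unfolding approx_def by (meson half_gt_zero)
  show "\<exists>r. poly r 0 = 0 \<and> (\<forall>t\<in>{-1..1}. \<bar>F t - G t - poly r t\<bar> \<le> e) \<and> norm (z - w - PE b r) \<le> e"
  proof (intro exI conjI ballI)
    show "poly (p - q) 0 = 0" using p q by simp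
    fix t :: real assume "t \<in> {-1..1}"
    then have "\<bar>F t - poly p t\<bar> \<le> e/2" "\<bar>G t - poly q t\<bar> \<le> e/2" using p(2) q(2) by auto
    moreover have "poly (p - q) t = poly p t - poly q t" by simp
    ultimately show "\<bar>F t - G t - poly (p - q) t\<bar> \<le> e" by arith
  next
    have eq: "z - w - PE b (p - q) = (z - PE b p) - (w - PE b q)" using p q by (simp add: PE_diff)
    have "norm (z - w - PE b (p - q)) \<le> norm (z - PE b p) + norm (w - PE b q)"
      unfolding eq by (rule norm_triangle_ineq4)
    then show "norm (z - w - PE b (p - q)) \<le> e" using p(3) q(3) by linarith
  qed
qed

lemma approx_mult:
  assumes "approx b F z" "approx b G w"
    and FM: "\<And>t. t \<in> {-1..1} \<Longrightarrow> \<bar>F t\<bar> \<le> M" and GM: "\<And>t. t \<in> {-1..1} \<Longrightarrow> \<bar>G t\<bar> \<le> M"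
  shows "approx b (\<lambda>t. F t * G t) (z * w)"
  unfolding approx_def
proof (intro allI impI)
  fix e :: real assume e: "e > 0"
  have M0: "M \<ge> 0" using FM[of 0] by simp
  define C where "C = 2 * M + 1 + norm w"
  have C: "C > 0" using M0 by (simp add: C_def add_pos_nonneg)
  define d where "d = min 1 (e / C)"
  have d: "d > 0" "d \<le> 1" "d * C \<le> e" using e C by (auto simp: d_def min_def field_simps)
  have dd: "d * d \<le> d" using d by (simp add: mult_left_le_one_le)
  have dC: "d * C = 2 * (d * M) + d + d * norm w" by (simp add: C_def algebra_simps)
  have dM: "d * M \<ge> 0" "d * norm w \<ge> 0" using d M0 by simp_all
  obtain p where p: "poly p 0 = 0" "\<forall>t\<in>{-1..1}. \<bar>F t - poly p t\<bar> \<le> d" "norm (z - PE b p) \<le> d"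
    using assms(1) d unfolding approx_def by blast
  obtain q where q: "poly q 0 = 0" "\<forall>t\<in>{-1..1}. \<bar>G t - poly q t\<bar> \<le> d" "norm (w - PE b q) \<le> d"
    using assms(2) d unfolding approx_def by blast
  show "\<exists>r. poly r 0 = 0 \<and> (\<forall>t\<in>{-1..1}. \<bar>F t * G t - poly r t\<bar> \<le> e) \<and> norm (z * w - PE b r) \<le> e"
  proof (intro exI conjI ballI)
    show "poly (p * q) 0 = 0" using p by simp
    fix t :: real assume t: "t \<in> {-1..1}"
    have "\<bar>F t - poly p t\<bar> \<le> d" using p(2) t by auto
    then have pt: "\<bar>poly p t\<bar> \<le> M + d" using FM[OF t] by arith
    have "F t * G t - poly (p * q) t = (F t - poly p t) * G t + poly p t * (G t - poly q t)"
      by (simp add: algebra_simps)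
    then have "\<bar>F t * G t - poly (p * q) t\<bar> \<le> \<bar>F t - poly p t\<bar> * \<bar>G t\<bar> + \<bar>poly p t\<bar> * \<bar>G t - poly q t\<bar>"
      by (simp add: abs_mult[symmetric] abs_triangle_ineq)
    also have "\<dots> \<le> d * M + (M + d) * d"
      using p(2) q(2) t GM[OF t] pt d
      by (intro add_mono mult_mono) auto
    also have "\<dots> = 2 * (d * M) + d * d" by (simp add: algebra_simps)
    also have "\<dots> \<le> d * C" using dC dd dM by linarith
    finally show "\<bar>F t * G t - poly (p * q) t\<bar> \<le> e" using d by linarith
  next
    have npe: "norm (PE b p) \<le> M + d"
    proof (rule PE_bound[OF p(1)])
      fix t :: real assume t: "t \<in> {-1..1}"
      have "\<bar>F t - poly p t\<bar> \<le> d" using p(2) t by auto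
      then show "\<bar>poly p t\<bar> \<le> M + d" using FM[OF t] by arith
    qed
    have "z * w - PE b (p * q) = (z - PE b p) * w + PE b p * (w - PE b q)"
      using p q by (simp add: PE_mult algebra_simps)
    then have "norm (z * w - PE b (p * q)) \<le> norm (z - PE b p) * norm w + norm (PE b p) * norm (w - PE b q)"
      by (metis (no_types, lifting) add_mono norm_mult_ineq norm_triangle_le)
    also have "\<dots> \<le> d * norm w + (M + d) * d"
      using p(3) q(3) npe d M0 by (intro add_mono mult_mono) auto
    also have "\<dots> = d * norm w + d * M + d * d" by (simp add: algebra_simps)
    also have "\<dots> \<le> d * C" using dC dd dM by linarith
    finally show "norm (z * w - PE b (p * q)) \<le> e" using d by linarith
  qed
qed

end


lemma poly_approx:
  fixes F :: "real \<Rightarrow> real"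
  assumes cont: "continuous_on {-1..1} F" and F0: "F 0 = 0" and e: "e > 0"
  shows "\<exists>p. poly p 0 = 0 \<and> (\<forall>t\<in>{-1..1}. \<bar>F t - poly p t\<bar> \<le> e)"
proof -
  obtain g :: "real \<Rightarrow> real" where g: "polynomial_function g" and gF: "\<forall>x\<in>{-1..1::real}. norm (F x - g x) < e/2"
    using Stone_Weierstrass_polynomial_function[OF compact_Icc cont, of "e/2"] e by auto
  have "real_polynomial_function g" using g by (simp add: real_polynomial_function_eq)
  then obtain a n where gs: "g = (\<lambda>x. \<Sum>i\<le>n. a i * x ^ i)"
    unfolding real_polynomial_function_iff_sum by blast
  define p0 where "p0 = (\<Sum>i\<le>n. monom (a i) i)"
  have pg: "poly p0 x = g x" for x by (simp add: p0_def gs poly_sum poly_monom)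
  define p where "p = p0 - [:poly p0 0:]"
  have pp: "poly p x = g x - g 0" for x by (simp add: p_def pg)
  have g0: "\<bar>F 0 - g 0\<bar> < e/2" using gF by auto
  show ?thesis
  proof (intro exI conjI ballI)
    show "poly p 0 = 0" by (simp add: pp)
    fix t :: real assume t: "t \<in> {-1..1}"
    have "\<bar>F t - g t\<bar> < e/2" using gF t by auto
    then show "\<bar>F t - poly p t\<bar> \<le> e" using g0 F0 unfolding pp by arith
  qed
qed

context
  fixes b :: "'a::cstar_algebra"
  assumes sa: "adj b = b" and nb: "norm b \<le> 1"
begin

lemma approx_exists:
  fixes F :: "real \<Rightarrow> real"
  assumes cont: "continuous_on {-1..1} F" and F0: "F 0 = 0"
  shows "\<exists>z. approx b F z"
proof -
  have "\<forall>n. \<exists>p. poly p 0 = 0 \<and> (\<forall>t\<in>{-1..1}. \<bar>F t - poly p t\<bar> \<le> 1 / Suc n)"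
    using poly_approx[OF cont F0] by simp
  then obtain P where P0: "\<And>n. poly (P n) 0 = 0" and PF: "\<And>n t. t \<in> {-1..1} \<Longrightarrow> \<bar>F t - poly (P n) t\<bar> \<le> 1 / Suc n"
    by metis
  define X where "X n = PE b (P n)" for n
  have dX: "norm (X m - X n) \<le> 1 / Suc m + 1 / Suc n" for m n
  proof -
    have "X m - X n = PE b (P m - P n)" by (simp add: X_def PE_diff P0)
    also have "norm \<dots> \<le> 1 / Suc m + 1 / Suc n"
    proof (rule PE_bound[OF sa nb])
      show "poly (P m - P n) 0 = 0" by (simp add: P0)
      fix t :: real assume t: "t \<in> {-1..1}"
      have "\<bar>F t - poly (P m) t\<bar> \<le> 1 / Suc m" "\<bar>F t - poly (P n) t\<bar> \<le> 1 / Suc n" using PF t by auto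
      moreover have "poly (P m - P n) t = poly (P m) t - poly (P n) t" by simp
      ultimately show "\<bar>poly (P m - P n) t\<bar> \<le> 1 / Suc m + 1 / Suc n" by arith
    qed
    finally show ?thesis .
  qed
  have small: "\<exists>M. 2 / real (Suc M) < e" if "e > 0" for e :: real
  proof -
    obtain M where "2 / e < real M" using reals_Archimedean2 by blast
    then have "2 < e * real (Suc M)" using that by (simp add: field_simps)
    then show ?thesis using that by (intro exI[of _ M]) (simp add: field_simps)
  qed
  have le2: "1 / real (Suc m) \<le> 1 / real (Suc M)" if "M \<le> m" for m M
    using that by (simp add: frac_le)
  have "Cauchy X"
    unfolding Cauchy_def
  proof (intro allI impI)
    fix e :: real assume e: "e > 0"
    obtain M where M: "2 / real (Suc M) < e" using small[OF e] by blast
    show "\<exists>M. \<forall>m\<ge>M. \<forall>n\<ge>M. dist (X m) (X n) < e"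
    proof (intro exI allI impI)
      fix m n assume "M \<le> m" "M \<le> n"
      then have "1 / real (Suc m) + 1 / real (Suc n) \<le> 2 / real (Suc M)"
        using le2[of M m] le2[of M n] by simp
      then show "dist (X m) (X n) < e" using dX[of m n] M by (simp add: dist_norm)
    qed
  qed
  then obtain z where z: "X \<longlonglongrightarrow> z" using Cauchy_convergent_iff convergent_def by blast
  have zX: "norm (z - X n) \<le> 2 / Suc n" for n
  proof (rule Lim_bounded)
    show "(\<lambda>m. norm (X m - X n)) \<longlonglongrightarrow> norm (z - X n)" by (intro tendsto_intros z)
    show "\<forall>m\<ge>n. norm (X m - X n) \<le> 2 / real (Suc n)"
    proof (intro allI impI)
      fix m assume "n \<le> m"
      then show "norm (X m - X n) \<le> 2 / real (Suc n)" using dX[of m n] le2[of n m] by simp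
    qed
  qed
  have "approx b F z"
    unfolding approx_def
  proof (intro allI impI)
    fix e :: real assume e: "e > 0"
    obtain n where n: "2 / real (Suc n) < e" using small[OF e] by blast
    have "1 / real (Suc n) \<le> 2 / real (Suc n)" by (simp add: frac_le)
    then show "\<exists>p. poly p 0 = 0 \<and> (\<forall>t\<in>{-1..1}. \<bar>F t - poly p t\<bar> \<le> e) \<and> norm (z - PE b p) \<le> e"
      using P0[of n] PF[of _ n] zX[of n] n unfolding X_def
      by (intro exI[of _ "P n"]) force
  qed
  then show ?thesis by blast
qed

end


definition ff :: "real \<Rightarrow> real" where "ff t = min 1 (max 0 (8 * \<bar>t\<bar> - 1))"
definition gg :: "real \<Rightarrow> real" where "gg t = min 1 (max 0 (4 * \<bar>t\<bar> - 1))"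
definition kk :: "real \<Rightarrow> real" where "kk t = ff t * t / max (t\<^sup>2) (1/64)"

lemma cont_ff: "continuous_on S ff"
  unfolding ff_def by (intro continuous_intros)
lemma cont_gg: "continuous_on S gg"
  unfolding gg_def by (intro continuous_intros)
lemma cont_kk: "continuous_on S kk"
  unfolding kk_def by (intro continuous_intros cont_ff) (auto simp: max_def)

lemma ff0 [simp]: "ff 0 = 0" and gg0 [simp]: "gg 0 = 0" and kk0 [simp]: "kk 0 = 0"
  by (simp_all add: ff_def gg_def kk_def)

lemma ff_bound: "\<bar>ff t\<bar> \<le> 8" and gg_bound: "\<bar>gg t\<bar> \<le> 8"
  by (simp_all add: ff_def gg_def)

lemma t_kk: "t * kk t = ff t"
proof (cases "\<bar>t\<bar> < 1/8")
  case True
  then have "ff t = 0" by (simp add: ff_def)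
  then show ?thesis by (simp add: kk_def)
next
  case False
  then have "1/8 * (1/8) \<le> \<bar>t\<bar> * \<bar>t\<bar>" by (intro mult_mono) auto
  then have t2: "t\<^sup>2 \<ge> 1/64" by (simp add: power2_eq_square abs_mult_self_eq)
  have t0: "t \<noteq> 0" using False by auto
  have m: "max (t\<^sup>2) (1/64) = t\<^sup>2" using t2 by (simp add: max_def)
  have "t * kk t = t * (ff t * t / t\<^sup>2)" by (simp only: kk_def m)
  also have "\<dots> = ff t" using t0 by (simp add: power2_eq_square)
  finally show ?thesis .
qed

lemma kk_bound: "\<bar>kk t\<bar> \<le> 8"
proof (cases "\<bar>t\<bar> < 1/8")
  case True
  then have "ff t = 0" by (simp add: ff_def)
  then show ?thesis by (simp add: kk_def)
next
  case False
  have t0: "t \<noteq> 0" using False by auto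
  have "kk t = ff t / t" using t_kk[of t] t0 by (simp add: eq_divide_eq mult.commute)
  then have "\<bar>kk t\<bar> = \<bar>ff t\<bar> / \<bar>t\<bar>" by simp
  also have "\<dots> \<le> 1 / \<bar>t\<bar>" by (intro divide_right_mono) (auto simp: ff_def)
  also have "\<dots> \<le> 8" using False by (simp add: field_simps)
  finally show ?thesis .
qed

lemma ff_gg: "ff t * gg t = gg t"
proof (cases "\<bar>t\<bar> \<le> 1/4")
  case True then show ?thesis by (simp add: gg_def)
next
  case False then have "ff t = 1" by (simp add: ff_def)
  then show ?thesis by simp
qed

lemma t_gg: "\<bar>t\<bar> \<le> 1 \<Longrightarrow> \<bar>t - t * gg t\<bar> \<le> 1/2"
proof -
  assume t1: "\<bar>t\<bar> \<le> 1"
  consider "\<bar>t\<bar> \<le> 1/4" | "\<bar>t\<bar> \<ge> 1/2" | "1/4 < \<bar>t\<bar>" "\<bar>t\<bar> < 1/2" by linarith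
  then show ?thesis
  proof cases
    case 1 then have "gg t = 0" by (simp add: gg_def)
    then show ?thesis using 1 by simp
  next
    case 2 then have "gg t = 1" by (simp add: gg_def)
    then show ?thesis by simp
  next
    case 3 then have g: "gg t = 4 * \<bar>t\<bar> - 1" by (simp add: gg_def)
    have "t - t * gg t = t * (2 - 4 * \<bar>t\<bar>)" by (simp add: g algebra_simps)
    then have "\<bar>t - t * gg t\<bar> = \<bar>t\<bar> * (2 - 4 * \<bar>t\<bar>)" using 3 by (simp add: abs_mult)
    also have "\<dots> \<le> (1/2) * 1" using 3 by (intro mult_mono) auto
    finally show ?thesis by simp
  qed
qed

lemma calc_main:
  fixes b :: "'a::cstar_algebra"
  assumes sa: "adj b = b" and nb: "norm b = 1"
  shows "\<exists>\<kappa> \<zeta>. b * \<kappa> * \<zeta> = \<zeta> \<and> \<zeta> \<noteq> 0"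
proof -
  have nb1: "norm b \<le> 1" using nb by simp
  obtain \<kappa> where k: "approx b kk \<kappa>" using approx_exists[OF sa nb1 cont_kk kk0] by blast
  obtain U where u: "approx b ff U" using approx_exists[OF sa nb1 cont_ff ff0] by blast
  obtain Z where g: "approx b gg Z" using approx_exists[OF sa nb1 cont_gg gg0] by blast
  have X8: "\<bar>t\<bar> \<le> 8" if "t \<in> {-1..1}" for t :: real using that by auto
  have bk: "approx b (\<lambda>t. t * kk t) (b * \<kappa>)"
    by (rule approx_mult[OF sa nb1 approx_X[OF sa nb1] k X8 kk_bound])
  then have "approx b ff (b * \<kappa>)" by (rule approx_cong[OF sa nb1]) (simp add: t_kk)
  then have bU: "b * \<kappa> = U" by (rule approx_unique[OF sa nb1 _ u])
  have "approx b (\<lambda>t. ff t * gg t) (U * Z)"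
    by (rule approx_mult[OF sa nb1 u g ff_bound gg_bound])
  then have "approx b gg (U * Z)" by (rule approx_cong[OF sa nb1]) (simp add: ff_gg)
  then have UZ: "U * Z = Z" by (rule approx_unique[OF sa nb1 _ g])
  have Z0: "Z \<noteq> 0"
  proof
    assume Z0: "Z = 0"
    have "approx b (\<lambda>t. t * gg t) (b * Z)"
      by (rule approx_mult[OF sa nb1 approx_X[OF sa nb1] g X8 gg_bound])
    from approx_diff[OF sa nb1 approx_X[OF sa nb1] this]
    have "approx b (\<lambda>t. t - t * gg t) b" using Z0 by simp
    then have "norm b \<le> 1/2"
    proof (rule approx_bound[OF sa nb1])
      fix t :: real assume "t \<in> {-1..1}"
      then have "\<bar>t\<bar> \<le> 1" by auto
      then show "\<bar>t - t * gg t\<bar> \<le> 1/2" by (rule t_gg)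
    qed
    then show False using nb by simp
  qed
  show ?thesis using bU UZ Z0 by (intro exI[of _ \<kappa>] exI[of _ Z]) simp
qed


lemma fix_element:
  fixes x :: "'a::cstar_algebra"
  assumes x: "x \<noteq> 0"
  shows "\<exists>c z. x * c * z = z \<and> z \<noteq> 0"
proof -
  define h where "h = x * adj x"
  have nh: "norm h = norm x * norm x" by (simp add: h_def cstar_identity')
  have nh0: "norm h > 0" using x by (simp add: nh)
  define b where "b = scaleR (1 / norm h) h"
  have sah: "adj h = h" by (simp add: h_def adj_mult adj_adj)
  have sa: "adj b = b" by (simp add: b_def adj_scaleR sah)
  have nb: "norm b = 1" using nh0 by (simp add: b_def)
  obtain \<kappa> \<zeta> where kz: "b * \<kappa> * \<zeta> = \<zeta>" and z0: "\<zeta> \<noteq> 0" using calc_main[OF sa nb] by blast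
  define c where "c = scaleR (1 / norm h) (adj x * \<kappa>)"
  have "x * c = b * \<kappa>" by (simp add: c_def b_def h_def mult.assoc)
  then have "x * c * \<zeta> = \<zeta>" using kz by simp
  with z0 show ?thesis by blast
qed

theorem mainTheorem1:
  fixes J :: "'a::cstar_algebra set"
  assumes "closed_right_ideal J"
    and "topologically_essential J"
  shows "essential J"
  unfolding essential_def
proof (intro allI impI)
  fix I :: "'a set" assume I: "right_ideal I \<and> I \<noteq> {0}"
  then have I0: "0 \<in> I" and Imul: "\<And>x a. x \<in> I \<Longrightarrow> x * a \<in> I" by (auto simp: right_ideal_def)
  obtain x where xI: "x \<in> I" and x0: "x \<noteq> 0" using I I0 by blast
  obtain c z where xcz: "x * c * z = z" and z0: "z \<noteq> 0" using fix_element[OF x0] by blast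
  define K where "K = {w. x * c * w = w}"
  have rK: "right_ideal K"
    unfolding right_ideal_def K_def
    by (simp add: distrib_left mult_scaleC_right mult.assoc[symmetric])
  have cK: "closed K"
    unfolding K_def by (intro closed_Collect_eq continuous_intros)
  have "K \<noteq> {0}" using xcz z0 by (auto simp: K_def)
  then have "J \<inter> K \<noteq> {0}"
    using assms(2) rK cK unfolding topologically_essential_def closed_right_ideal_def by blast
  moreover have "0 \<in> J \<inter> K"
    using assms(1) by (simp add: closed_right_ideal_def right_ideal_def K_def)
  ultimately obtain y where yJ: "y \<in> J" and yK: "y \<in> K" and y0: "y \<noteq> 0" by blast
  have "y = x * (c * y)" using yK by (simp add: K_def mult.assoc)
  then have "y \<in> I" using Imul[OF xI] by metis
  then have "y \<in> J \<inter> I" using yJ by blast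
  then show "J \<inter> I \<noteq> {0}" using y0 by blast
qed


end
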